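(* Let $N\ge2$, $m=[N/2]$, $\lambda=(\lambda_1,\dots,\lambda_N)\in\mathbb{C}^N$ and $\kappa=(\kappa_1,\dots,\kappa_m)\in(0,\infty)^m$. For $j=1,\dots,m$ let $\alpha_j=e_{2j-1}-e_{2j}$ and let $\tau_j$ be the orthogonal projection onto $\alpha_j^\perp$, i.e. $\tau_jx$ is obtained from $x$ by replacing both $x_{2j-1}$ and $x_{2j}$ by $\frac12(x_{2j-1}+x_{2j})$. For $\xi\in\mathbb{R}^N$ define $$(T_\xi f)(x)=\partial_\xi f(x)+\sum_{j=1}^m\kappa_j\langle\alpha_j,\xi\rangle\frac{f(x)-f(\tau_jx)}{x_{2j-1}-x_{2j}},$$ extended complex-linearly to $\xi\in\mathbb{C}^N$. Let $h(0,x)=x-\sum_{j=1}^m\frac{x_{2j-1}-x_{2j}}{2}(e_{2j-1}-e_{2j})$. Then the problem $$T_\xi f=i\langle\lambda,\xi\rangle f\ \ \text{for all }\xi\in\mathbb{C}^N,\qquad f(0)=1,$$ has a unique analytic solution, given by $$M_\kappa(\lambda,x)=e^{i\langle\lambda,h(0,x)\rangle}\prod_{j=1}^m M_{\kappa_j}\Big(\frac{i}{2}(\lambda_{2j-1}-\lambda_{2j})(x_{2j-1}-x_{2j})\Big),$$ where $M_{\kappa_j}(z)=M(1,\kappa_j+1;z)=\sum_{n\ge0}\frac{z^n}{(\kappa_j+1)_n}$.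
   Context: $e_1,\dots,e_N$ is the standard basis of $\mathbb{R}^N$, $\langle\cdot,\cdot\rangle$ the (bilinear) standard pairing, $\partial_\xi$ the directional derivative, $[N/2]$ the integer part, $(a)_n=\Gamma(a+n)/\Gamma(a)$. For analytic $f$ the difference quotients are understood as their analytic extensions across $x_{2j-1}=x_{2j}$. The vectors $\alpha_j$ form a positive orthogonal subsystem of the root system $A_{N-1}=\{\pm(e_i-e_j):1\le i<j\le N\}$. *)

theory Defs
  imports "HOL-Analysis.Analysis"
begin

text \<open>Coordinates of R^N are indexed by a finite type 'n, enumerated by a bijection
  ix from {0..<N} (0-based), so e_k (1-based) corresponds to index ix (k-1).
  The pair alpha_j = e_{2j-1} - e_{2j} (j = 1..m) becomes, 0-based with j < m,
  the coordinates ix (2*j) and ix (2*j+1).\<close>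

definition real_analytic :: "(real ^ 'n \<Rightarrow> complex) \<Rightarrow> bool" where
  "real_analytic f \<longleftrightarrow> (\<forall>a. \<exists>r>0. \<exists>c :: ('n \<Rightarrow> nat) \<Rightarrow> complex.
      \<forall>x. dist x a < r \<longrightarrow>
        ((\<lambda>\<alpha>. c \<alpha> * (\<Prod>i\<in>UNIV. complex_of_real (x $ i - a $ i) ^ \<alpha> i)) has_sum f x) UNIV)"

definition dir_deriv :: "(real ^ 'n \<Rightarrow> complex) \<Rightarrow> real ^ 'n \<Rightarrow> real ^ 'n \<Rightarrow> complex" where
  "dir_deriv f \<xi> x = frechet_derivative f (at x) \<xi>"

definition tau_pair :: "'n \<Rightarrow> 'n \<Rightarrow> real ^ 'n \<Rightarrow> real ^ 'n" where
  "tau_pair a b x = (\<chi> i. if i = a \<or> i = b then (x $ a + x $ b) / 2 else x $ i)"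

text \<open>The difference quotient (f x - f (tau x)) / (x_a - x_b), extended continuously
  (= analytically, for analytic f) across the hyperplane x_a = x_b.\<close>
definition diff_quot :: "(real ^ 'n \<Rightarrow> complex) \<Rightarrow> 'n \<Rightarrow> 'n \<Rightarrow> real ^ 'n \<Rightarrow> complex" where
  "diff_quot f a b x =
     (let q = (\<lambda>y. (f y - f (tau_pair a b y)) / complex_of_real (y $ a - y $ b))
      in if x $ a \<noteq> x $ b then q x else Lim (at x within {y. y $ a \<noteq> y $ b}) q)"

definition T_real :: "(nat \<Rightarrow> 'n) \<Rightarrow> (nat \<Rightarrow> real) \<Rightarrow> (real ^ 'n \<Rightarrow> complex)
    \<Rightarrow> real ^ 'n \<Rightarrow> real ^ 'n \<Rightarrow> complex" where
  "T_real ix \<kappa> f \<xi> x =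
     dir_deriv f \<xi> x +
     (\<Sum>j<CARD('n) div 2. complex_of_real (\<kappa> j * (\<xi> $ ix (2*j) - \<xi> $ ix (2*j+1)))
        * diff_quot f (ix (2*j)) (ix (2*j+1)) x)"

definition T_op :: "(nat \<Rightarrow> 'n) \<Rightarrow> (nat \<Rightarrow> real) \<Rightarrow> (real ^ 'n \<Rightarrow> complex)
    \<Rightarrow> complex ^ 'n \<Rightarrow> real ^ 'n \<Rightarrow> complex" where
  "T_op ix \<kappa> f \<zeta> x =
     T_real ix \<kappa> f (\<chi> i. Re (\<zeta> $ i)) x + \<i> * T_real ix \<kappa> f (\<chi> i. Im (\<zeta> $ i)) x"

definition pairing :: "complex ^ 'n \<Rightarrow> complex ^ 'n \<Rightarrow> complex" where
  "pairing u v = (\<Sum>i\<in>UNIV. u $ i * v $ i)"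

definition h0 :: "(nat \<Rightarrow> 'n) \<Rightarrow> real ^ 'n \<Rightarrow> real ^ 'n" where
  "h0 ix x = x - (\<Sum>j<CARD('n) div 2.
      ((x $ ix (2*j) - x $ ix (2*j+1)) / 2) *\<^sub>R (axis (ix (2*j)) 1 - axis (ix (2*j+1)) 1))"

definition M1 :: "real \<Rightarrow> complex \<Rightarrow> complex" where
  "M1 k z = (\<Sum>n. z ^ n / pochhammer (complex_of_real (k + 1)) n)"

definition M_kernel :: "(nat \<Rightarrow> 'n) \<Rightarrow> (nat \<Rightarrow> real) \<Rightarrow> complex ^ 'n \<Rightarrow> real ^ 'n \<Rightarrow> complex" where
  "M_kernel ix \<kappa> lam x =
     exp (\<i> * pairing lam (\<chi> i. complex_of_real (h0 ix x $ i))) *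
     (\<Prod>j<CARD('n) div 2.
        M1 (\<kappa> j) (\<i> / 2 * (lam $ ix (2*j) - lam $ ix (2*j+1))
                      * complex_of_real (x $ ix (2*j) - x $ ix (2*j+1))))"

end

theory Submission
  imports Defs "HOL-Complex_Analysis.Complex_Analysis"
begin


definition cM :: "real \<Rightarrow> nat \<Rightarrow> complex" where
  "cM k n = 1 / pochhammer (complex_of_real (k + 1)) n"

definition Hs :: "real \<Rightarrow> complex \<Rightarrow> complex" where
  "Hs k z = (\<Sum>n. cM k (Suc n) * z ^ n)"

definition dM :: "real \<Rightarrow> complex \<Rightarrow> complex" where
  "dM k z = (\<Sum>n. diffs (cM k) n * z ^ n)"

lemma M1_alt: "M1 k z = (\<Sum>n. cM k n * z ^ n)"
  unfolding M1_def cM_def by (simp add: divide_inverse mult.commute)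

lemma fact_le_poch: "(x::real) \<ge> 1 \<Longrightarrow> fact n \<le> pochhammer x n"
proof (induction n)
  case 0 then show ?case by simp
next
  case (Suc n)
  have "fact (Suc n) = fact n * (1 + real n)" by (simp add: algebra_simps)
  also have "\<dots> \<le> pochhammer x n * (x + real n)"
  proof (rule mult_mono)
    show "0 \<le> pochhammer x n" using Suc by (metis fact_ge_zero order_trans)
  qed (use Suc in auto)
  finally show ?case by (simp add: pochhammer_Suc)
qed

lemma cM_bound: "k \<ge> 0 \<Longrightarrow> norm (cM k n) \<le> 1 / fact n"
proof -
  assume k: "k \<ge> 0"
  have p: "fact n \<le> pochhammer (k+1) n" using k by (intro fact_le_poch) auto
  have pos: "0 < (fact n :: real)" by simp
  have pp: "0 < pochhammer (k+1) n" using p pos by linarith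
  have e: "cM k n = complex_of_real (1 / pochhammer (k+1) n)"
    unfolding cM_def by (simp only: pochhammer_of_real[symmetric] of_real_divide of_real_1 of_real_add)
  have "norm (cM k n) = 1 / pochhammer (k+1) n"
    unfolding e norm_of_real using pp by simp
  also have "\<dots> \<le> 1 / fact n" using p pos pp by (intro frac_le) auto
  finally show ?thesis .
qed

lemma summable_fact_bound:
  fixes c :: "nat \<Rightarrow> complex"
  assumes "\<And>n. norm (c n) \<le> 1 / fact n"
  shows "summable (\<lambda>n. norm (c n * z ^ n))"
proof (rule summable_comparison_test'[OF summable_exp[of "norm z"]])
  fix n :: nat
  have "norm (c n * z ^ n) = norm (c n) * norm z ^ n" by (simp add: norm_mult norm_power)
  also have "\<dots> \<le> 1 / fact n * norm z ^ n" using assms by (intro mult_right_mono) auto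
  finally show "norm (norm (c n * z ^ n)) \<le> inverse (fact n) * norm z ^ n"
    by (simp add: divide_inverse)
qed

lemma cM_summable: "k \<ge> 0 \<Longrightarrow> summable (\<lambda>n. cM k n * z ^ n)"
  by (rule summable_norm_cancel, rule summable_fact_bound, rule cM_bound)

lemma cM_Suc_summable: "k \<ge> 0 \<Longrightarrow> summable (\<lambda>n. cM k (Suc n) * z ^ n)"
proof (rule summable_norm_cancel, rule summable_fact_bound)
  fix n assume "k \<ge> 0"
  then have "norm (cM k (Suc n)) \<le> 1 / fact (Suc n)" by (rule cM_bound)
  also have "\<dots> \<le> 1 / fact n" by (intro divide_left_mono) (auto simp: fact_mono)
  finally show "norm (cM k (Suc n)) \<le> 1 / fact n" .
qed

lemma M1_0: "M1 k 0 = 1"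
  unfolding M1_alt by (subst suminf_finite[of "{0}"]) (auto simp: cM_def)

lemma M1_minus1: "k \<ge> 0 \<Longrightarrow> M1 k z - 1 = z * Hs k z"
proof -
  assume k: "k \<ge> 0"
  have "(\<Sum>n. cM k (Suc n) * z ^ Suc n) = M1 k z - cM k 0 * z ^ 0"
    unfolding M1_alt by (rule suminf_split_head[OF cM_summable[OF k]])
  moreover have "(\<Sum>n. cM k (Suc n) * z ^ Suc n) = z * Hs k z"
    unfolding Hs_def using suminf_mult[OF cM_Suc_summable[OF k], of z]
    by (simp add: algebra_simps)
  ultimately show ?thesis by (simp add: cM_def)
qed

lemma M1_deriv: "k \<ge> 0 \<Longrightarrow> (M1 k has_field_derivative dM k z) (at z)"
proof -
  assume k: "k \<ge> 0"
  have "((\<lambda>z. \<Sum>n. cM k n * z ^ n) has_field_derivative (\<Sum>n. diffs (cM k) n * z ^ n)) (at z)"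
    by (rule termdiffs_strong_converges_everywhere, rule cM_summable[OF k])
  moreover have "M1 k = (\<lambda>z. \<Sum>n. cM k n * z ^ n)" by (rule ext, rule M1_alt)
  ultimately show ?thesis unfolding dM_def by simp
qed

lemma M1_ident: "k \<ge> 0 \<Longrightarrow> dM k z + complex_of_real k * Hs k z = M1 k z"
proof -
  assume k: "k \<ge> 0"
  have s1: "summable (\<lambda>n. diffs (cM k) n * z ^ n)"
    by (rule termdiff_converges_all, rule cM_summable[OF k])
  have s2: "summable (\<lambda>n. complex_of_real k * (cM k (Suc n) * z ^ n))"
    by (rule summable_mult, rule cM_Suc_summable[OF k])
  have coef: "diffs (cM k) n + complex_of_real k * cM k (Suc n) = cM k n" for n
  proof -
    have nz: "complex_of_real (k + 1) + of_nat n \<noteq> 0"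
    proof
      assume "complex_of_real (k + 1) + of_nat n = 0"
      then have "Re (complex_of_real (k + 1) + of_nat n) = 0" by simp
      with k show False by simp
    qed
    have "cM k (Suc n) = cM k n / (complex_of_real (k + 1) + of_nat n)"
      unfolding cM_def by (simp add: pochhammer_Suc)
    then show ?thesis unfolding diffs_def using nz
      by (simp add: field_simps)
  qed
  have "dM k z + complex_of_real k * Hs k z
      = (\<Sum>n. diffs (cM k) n * z ^ n + complex_of_real k * (cM k (Suc n) * z ^ n))"
    unfolding dM_def Hs_def
    by (simp add: suminf_add[OF s1 s2, symmetric] suminf_mult[OF cM_Suc_summable[OF k]])
  also have "\<dots> = (\<Sum>n. cM k n * z ^ n)"
  proof (rule suminf_cong)
    fix n
    have "diffs (cM k) n * z ^ n + complex_of_real k * (cM k (Suc n) * z ^ n)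
        = (diffs (cM k) n + complex_of_real k * cM k (Suc n)) * z ^ n"
      by (simp add: algebra_simps)
    then show "diffs (cM k) n * z ^ n + complex_of_real k * (cM k (Suc n) * z ^ n) = cM k n * z ^ n"
      by (simp only: coef)
  qed
  finally show ?thesis unfolding M1_alt .
qed


lemma G_deriv:
  assumes k: "k \<ge> 0"
  shows "((\<lambda>t. M1 k (a * complex_of_real t)) has_vector_derivative (a * dM k (a * complex_of_real t))) (at t within S)"
proof -
  have "((\<lambda>z. M1 k (a * z)) has_field_derivative (dM k (a * of_real t) * a)) (at (of_real t))"
    by (rule DERIV_chain2[OF M1_deriv[OF k]]) (auto intro!: derivative_eq_intros)
  from has_vector_derivative_real_field[OF this] show ?thesis by (simp add: mult.commute)
qed

lemma G_ode:
  assumes k: "k \<ge> 0" and t: "t \<noteq> 0"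
  shows "a * dM k (a * complex_of_real t) =
     a * M1 k (a * complex_of_real t) - complex_of_real k * (M1 k (a * complex_of_real t) - 1) / complex_of_real t"
proof -
  let ?z = "a * complex_of_real t"
  have i: "dM k ?z = M1 k ?z - complex_of_real k * Hs k ?z" using M1_ident[OF k, of ?z] by (simp add: algebra_simps)
  have m: "M1 k ?z - 1 = ?z * Hs k ?z" by (rule M1_minus1[OF k])
  have tt: "complex_of_real t \<noteq> 0" using t by simp
  show ?thesis unfolding i m using tt by (simp add: field_simps)
qed

lemma pos_side_zero:
  fixes p :: "real \<Rightarrow> complex"
  assumes k: "k > 0"
    and lim: "(p \<longlongrightarrow> 0) (at_right 0)"
    and der: "\<And>t. t > 0 \<Longrightarrow> (p has_vector_derivative (a * p t - complex_of_real k * p t / complex_of_real t)) (at t)"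
    and t: "t > 0"
  shows "p t = 0"
proof -
  define \<psi> where "\<psi> t = p t * complex_of_real (t powr k) * exp (- (a * complex_of_real t))" for t
  have d0: "(\<psi> has_derivative (\<lambda>h. 0)) (at s within {0<..})" if s: "s > 0" for s
  proof -
    have d1: "((\<lambda>t. complex_of_real (t powr k)) has_vector_derivative complex_of_real (k * s powr (k - 1))) (at s)"
      by (rule has_vector_derivative_of_real, rule has_real_derivative_powr[OF s])
    have "((\<lambda>z. exp (- (a * z))) has_field_derivative (exp (- (a * of_real s)) * (- a))) (at (of_real s))"
      by (auto intro!: derivative_eq_intros)
    from has_vector_derivative_real_field[OF this]
    have d2: "((\<lambda>t. exp (- (a * complex_of_real t))) has_vector_derivative (exp (- (a * of_real s)) * (- a))) (at s)" .
    have dd: "(\<psi> has_vector_derivative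
       ((p s * complex_of_real (s powr k)) * (exp (- (a * of_real s)) * (- a)) +
        (p s * complex_of_real (k * s powr (k - 1)) + (a * p s - complex_of_real k * p s / complex_of_real s) * complex_of_real (s powr k)) * exp (- (a * complex_of_real s)))) (at s)"
      unfolding \<psi>_def
      by (intro has_vector_derivative_mult der[OF s] d1 d2)
    have pw: "s powr (k - 1) = s powr k / s" using s by (simp add: powr_diff)
    have "(p s * complex_of_real (s powr k)) * (exp (- (a * of_real s)) * (- a)) +
        (p s * complex_of_real (k * s powr (k - 1)) + (a * p s - complex_of_real k * p s / complex_of_real s) * complex_of_real (s powr k)) * exp (- (a * complex_of_real s)) = 0"
      unfolding pw using s by (simp add: field_simps)
    with dd have "(\<psi> has_vector_derivative 0) (at s)" by simp
    then show ?thesis unfolding has_vector_derivative_def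
      by (auto intro: has_derivative_at_withinI)
  qed
  obtain c where c: "\<And>s. s \<in> {0<..} \<Longrightarrow> \<psi> s = c"
    using has_derivative_zero_constant[of "{0::real<..}" \<psi>] d0 by (auto simp: convex_real_interval)
  have l1: "(\<psi> \<longlongrightarrow> 0 * complex_of_real 0 * exp (- (a * complex_of_real 0))) (at_right 0)"
    unfolding \<psi>_def
  proof (intro tendsto_intros lim)
    show "((\<lambda>x. x powr k) \<longlongrightarrow> 0) (at_right 0)"
      by (rule tendsto_zero_powrI) (auto intro: tendsto_intros k simp: eventually_at_right_less eventually_at_filter)
  qed
  have l2: "(\<psi> \<longlongrightarrow> c) (at_right 0)"
  proof (rule tendsto_eventually)
    show "\<forall>\<^sub>F x in at_right 0. \<psi> x = c"
      using c eventually_at_right_less[of 0] by (auto elim: eventually_mono)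
  qed
  have "c = 0" using tendsto_unique[OF _ l2 l1] by simp
  then have "\<psi> t = 0" using c t by simp
  moreover have "complex_of_real (t powr k) \<noteq> 0" using t by simp
  ultimately show ?thesis unfolding \<psi>_def by simp
qed


lemma ode_unique_pos:
  fixes q :: "real \<Rightarrow> complex"
  assumes k: "k > 0"
    and cont: "isCont q 0"
    and der: "\<And>t. t > 0 \<Longrightarrow> (q has_vector_derivative (a * q t - complex_of_real k * (q t - q 0) / complex_of_real t)) (at t)"
    and t: "t > 0"
  shows "q t = q 0 * M1 k (a * complex_of_real t)"
proof -
  define p where "p t = q t - q 0 * M1 k (a * complex_of_real t)" for t
  have k0: "k \<ge> 0" using k by simp
  have "p t = 0"
  proof (rule pos_side_zero[OF k _ _ t])
    have c2: "isCont (\<lambda>t. M1 k (a * complex_of_real t)) 0"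
      using G_deriv[OF k0, of a 0 UNIV] by (auto intro: has_vector_derivative_continuous)
    have "isCont p 0" unfolding p_def using cont c2 by (intro continuous_intros)
    then have "(p \<longlongrightarrow> p 0) (at_right 0)"
      by (simp add: isCont_def filterlim_at_split)
    moreover have "p 0 = 0" unfolding p_def by (simp add: M1_0)
    ultimately show "(p \<longlongrightarrow> 0) (at_right 0)" by simp
  next
    fix s :: real assume s: "s > 0"
    have "(p has_vector_derivative
        ((a * q s - complex_of_real k * (q s - q 0) / complex_of_real s) - q 0 * (a * dM k (a * complex_of_real s)))) (at s)"
      unfolding p_def by (intro derivative_intros der[OF s] G_deriv[OF k0])
    moreover have "(a * q s - complex_of_real k * (q s - q 0) / complex_of_real s) - q 0 * (a * dM k (a * complex_of_real s))
        = a * p s - complex_of_real k * p s / complex_of_real s"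
      unfolding p_def using s by (subst G_ode[OF k0]) (simp_all add: field_simps)
    ultimately show "(p has_vector_derivative (a * p s - complex_of_real k * p s / complex_of_real s)) (at s)"
      by simp
  qed
  then show ?thesis unfolding p_def by simp
qed

lemma ode_unique:
  fixes q :: "real \<Rightarrow> complex"
  assumes k: "k > 0"
    and cont: "isCont q 0"
    and der: "\<And>t. t \<noteq> 0 \<Longrightarrow> (q has_vector_derivative (a * q t - complex_of_real k * (q t - q 0) / complex_of_real t)) (at t)"
  shows "q t = q 0 * M1 k (a * complex_of_real t)"
proof -
  consider "t > 0" | "t = 0" | "t < 0" by linarith
  then show ?thesis
  proof cases
    case 1 then show ?thesis by (intro ode_unique_pos[OF k cont der]) auto
  next
    case 2 then show ?thesis by (simp add: M1_0)
  next
    case 3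
    define r where "r s = q (- s)" for s
    have "r (- t) = r 0 * M1 k ((- a) * complex_of_real (- t))"
    proof (rule ode_unique_pos[OF k])
      show "isCont r 0" unfolding r_def
        by (rule isCont_o2[where f=uminus]) (use cont in \<open>auto intro: continuous_intros\<close>)
    next
      show "- t > 0" using 3 by simp
    next
      fix s :: real assume s: "s > 0"
      have u: "(uminus has_vector_derivative (-1)) (at s)"
        using has_real_derivative_iff_has_vector_derivative[THEN iffD1, OF DERIV_minus[OF DERIV_ident, of s UNIV]]
        by (simp add: fun_eq_iff)
      have "((\<lambda>s. q (- s)) has_vector_derivative
               - (a * q (- s) - complex_of_real k * (q (- s) - q 0) / complex_of_real (- s))) (at s)"
        using vector_diff_chain_at[of uminus "-1" s q, OF u der[of "- s"]] s
        by (simp add: o_def)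
      moreover have "- (a * q (- s) - complex_of_real k * (q (- s) - q 0) / complex_of_real (- s))
          = (- a) * r s - complex_of_real k * (r s - r 0) / complex_of_real s"
        unfolding r_def by (simp add: field_simps)
      ultimately show "(r has_vector_derivative ((- a) * r s - complex_of_real k * (r s - r 0) / complex_of_real s)) (at s)"
        unfolding r_def by simp
    qed
    then show ?thesis unfolding r_def by simp
  qed
qed


definition Pm :: "real ^ 'n \<Rightarrow> ('n::finite \<Rightarrow> nat) \<Rightarrow> complex" where
  "Pm y \<alpha> = (\<Prod>i\<in>UNIV. complex_of_real (y $ i) ^ \<alpha> i)"

abbreviation deg :: "('n::finite \<Rightarrow> nat) \<Rightarrow> nat" where
  "deg \<alpha> \<equiv> sum \<alpha> UNIV"

lemma norm_Pm: "norm (Pm y \<alpha>) \<le> norm y ^ deg \<alpha>"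
proof -
  have "norm (Pm y \<alpha>) = (\<Prod>i\<in>UNIV. \<bar>y $ i\<bar> ^ \<alpha> i)"
    unfolding Pm_def by (simp add: prod_norm[symmetric] norm_power)
  also have "\<dots> \<le> (\<Prod>i\<in>UNIV. norm y ^ \<alpha> i)"
    by (intro prod_mono conjI power_mono component_le_norm_cart) auto
  also have "\<dots> = norm y ^ deg \<alpha>" by (simp add: power_sum)
  finally show ?thesis .
qed

lemma Pm_const: "Pm (\<chi> i. s) \<alpha> = complex_of_real s ^ deg \<alpha>"
  unfolding Pm_def by (simp add: power_sum)

lemma abs_sum_from_const:
  fixes c :: "('n::finite \<Rightarrow> nat) \<Rightarrow> complex"
  assumes s: "s > 0" and summ: "(\<lambda>\<alpha>. c \<alpha> * Pm (\<chi> i. s) \<alpha>) summable_on UNIV"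
  shows "(\<lambda>\<alpha>. norm (c \<alpha>) * s ^ deg \<alpha>) summable_on UNIV"
proof -
  have "(\<lambda>\<alpha>. norm (c \<alpha> * Pm (\<chi> i. s) \<alpha>)) summable_on UNIV"
    by (rule summable_on_iff_abs_summable_on_complex[THEN iffD1, OF summ])
  moreover have "norm (c \<alpha> * Pm (\<chi> i. s) \<alpha>) = norm (c \<alpha>) * s ^ deg \<alpha>" for \<alpha>
    using s by (simp add: Pm_const norm_mult norm_power)
  ultimately show ?thesis by simp
qed

lemma summable_small:
  fixes c :: "('n::finite \<Rightarrow> nat) \<Rightarrow> complex"
  assumes s: "s > 0" and g: "(\<lambda>\<alpha>. norm (c \<alpha>) * s ^ deg \<alpha>) summable_on UNIV"
    and y: "norm y \<le> s"
  shows "(\<lambda>\<alpha>. norm (c \<alpha> * Pm y \<alpha>)) summable_on A"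
proof -
  have "(\<lambda>\<alpha>. norm (c \<alpha> * Pm y \<alpha>)) summable_on UNIV"
  proof (rule Infinite_Sum.abs_summable_on_comparison_test)
    show "(\<lambda>\<alpha>. norm (norm (c \<alpha>) * s ^ deg \<alpha>)) summable_on UNIV" using g s by simp
  next
    fix \<alpha> :: "'n \<Rightarrow> nat"
    have "norm (c \<alpha> * Pm y \<alpha>) \<le> norm (c \<alpha>) * norm y ^ deg \<alpha>"
      unfolding norm_mult by (intro mult_left_mono norm_Pm) auto
    also have "\<dots> \<le> norm (c \<alpha>) * s ^ deg \<alpha>"
      using y by (intro mult_left_mono power_mono) auto
    finally show "norm (c \<alpha> * Pm y \<alpha>) \<le> norm (norm (c \<alpha>) * s ^ deg \<alpha>)" by simp
  qed
  then show ?thesis by (rule summable_on_subset_banach) auto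
qed

lemma remainder_bound:
  fixes c :: "('n::finite \<Rightarrow> nat) \<Rightarrow> complex"
  assumes s: "s > 0" and g: "(\<lambda>\<alpha>. norm (c \<alpha>) * s ^ deg \<alpha>) summable_on UNIV"
  shows "\<exists>K. \<forall>y. norm y \<le> s \<longrightarrow>
     norm (infsum (\<lambda>\<alpha>. c \<alpha> * Pm y \<alpha>) {\<alpha>. 2 \<le> deg \<alpha>}) \<le> K * norm y ^ 2"
proof -
  define H where "H = {\<alpha> :: 'n \<Rightarrow> nat. 2 \<le> deg \<alpha>}"
  define G where "G = infsum (\<lambda>\<alpha>. norm (c \<alpha>) * s ^ deg \<alpha>) H"
  have gH: "(\<lambda>\<alpha>. norm (c \<alpha>) * s ^ deg \<alpha>) summable_on H"
    using g by (rule summable_on_subset_banach) auto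
  show ?thesis
  proof (intro exI allI impI)
    fix y :: "real ^ 'n" assume y: "norm y \<le> s"
    define t where "t = norm y / s"
    have t0: "0 \<le> t" and t1: "t \<le> 1" using y s by (auto simp: t_def)
    have ny: "norm y = t * s" using s by (simp add: t_def)
    have as: "(\<lambda>\<alpha>. norm (c \<alpha> * Pm y \<alpha>)) summable_on H" by (rule summable_small[OF s g y])
    have "norm (infsum (\<lambda>\<alpha>. c \<alpha> * Pm y \<alpha>) H) \<le> infsum (\<lambda>\<alpha>. norm (c \<alpha> * Pm y \<alpha>)) H"
      by (rule norm_infsum_bound[OF as])
    also have "\<dots> \<le> infsum (\<lambda>\<alpha>. t ^ 2 * (norm (c \<alpha>) * s ^ deg \<alpha>)) H"
    proof (rule infsum_mono[OF as])
      show "(\<lambda>\<alpha>. t ^ 2 * (norm (c \<alpha>) * s ^ deg \<alpha>)) summable_on H"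
        by (rule summable_on_cmult_right[OF gH])
    next
      fix \<alpha> :: "'n \<Rightarrow> nat" assume "\<alpha> \<in> H"
      then have d: "2 \<le> deg \<alpha>" by (simp add: H_def)
      have "norm (c \<alpha> * Pm y \<alpha>) \<le> norm (c \<alpha>) * norm y ^ deg \<alpha>"
        unfolding norm_mult by (intro mult_left_mono norm_Pm) auto
      also have "\<dots> = norm (c \<alpha>) * s ^ deg \<alpha> * t ^ deg \<alpha>" unfolding ny by (simp add: power_mult_distrib)
      also have "\<dots> \<le> norm (c \<alpha>) * s ^ deg \<alpha> * t ^ 2"
        using s t0 t1 d by (intro mult_left_mono power_decreasing) auto
      finally show "norm (c \<alpha> * Pm y \<alpha>) \<le> t ^ 2 * (norm (c \<alpha>) * s ^ deg \<alpha>)" by (simp add: mult.commute)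
    qed
    also have "\<dots> = t ^ 2 * G" unfolding G_def by (rule infsum_cmult_right') 
    also have "\<dots> = G / s ^ 2 * norm y ^ 2" using s by (simp add: ny power_mult_distrib)
    finally show "norm (infsum (\<lambda>\<alpha>. c \<alpha> * Pm y \<alpha>) {\<alpha>. 2 \<le> deg \<alpha>}) \<le> G / s ^ 2 * norm y ^ 2"
      unfolding H_def .
  qed
qed


definition dl :: "'n \<Rightarrow> 'n \<Rightarrow> nat" where
  "dl i = (\<lambda>j. if j = i then 1 else 0)"

lemma deg_dl: "deg (dl (i::'n::finite)) = 1"
  unfolding dl_def by simp

lemma inj_dl: "inj dl"
  unfolding inj_def dl_def by (metis zero_neq_one)

lemma deg0: "deg (\<alpha>::'n::finite \<Rightarrow> nat) = 0 \<Longrightarrow> \<alpha> = (\<lambda>_. 0)"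
  by (auto simp: fun_eq_iff)

lemma deg1: "deg (\<alpha>::'n::finite \<Rightarrow> nat) = 1 \<Longrightarrow> \<exists>i. \<alpha> = dl i"
proof -
  assume d: "deg \<alpha> = 1"
  have "\<exists>i. \<alpha> i \<noteq> 0"
  proof (rule ccontr)
    assume "\<not> (\<exists>i. \<alpha> i \<noteq> 0)"
    then have "\<alpha> = (\<lambda>_. 0)" by auto
    then show False using d by simp
  qed
  then obtain i where i: "\<alpha> i \<noteq> 0" by blast
  have "\<alpha> i \<le> deg \<alpha>" by (rule member_le_sum) auto
  with i d have ai: "\<alpha> i = 1" by simp
  have "\<alpha> j = 0" if "j \<noteq> i" for j
  proof -
    have "sum \<alpha> {i, j} \<le> deg \<alpha>" by (rule sum_mono2) auto
    with that ai d show ?thesis by simp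
  qed
  with ai have "\<alpha> = dl i" by (auto simp: dl_def fun_eq_iff)
  then show ?thesis ..
qed

lemma low_set: "{\<alpha> :: 'n::finite \<Rightarrow> nat. \<not> 2 \<le> deg \<alpha>} = insert (\<lambda>_. 0) (range dl)"
proof (intro equalityI subsetI)
  fix \<alpha> :: "'n \<Rightarrow> nat" assume "\<alpha> \<in> {\<alpha>. \<not> 2 \<le> deg \<alpha>}"
  then have "\<not> 2 \<le> deg \<alpha>" by simp
  then have "deg \<alpha> = 0 \<or> deg \<alpha> = 1" by linarith
  then show "\<alpha> \<in> insert (\<lambda>_. 0) (range dl)" using deg0 deg1 by blast
next
  fix \<alpha> :: "'n \<Rightarrow> nat" assume "\<alpha> \<in> insert (\<lambda>_. 0) (range dl)"
  then show "\<alpha> \<in> {\<alpha>. \<not> 2 \<le> deg \<alpha>}" by (auto simp: deg_dl)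
qed

lemma Pm_0: "Pm y (\<lambda>_. 0) = 1" unfolding Pm_def by simp

lemma Pm_dl: "Pm y (dl i) = complex_of_real (y $ i)"
  unfolding Pm_def dl_def by (simp add: if_distrib prod.If_cases)

lemma low_sum: "(\<Sum>\<alpha>\<in>{\<alpha> :: 'n::finite \<Rightarrow> nat. \<not> 2 \<le> deg \<alpha>}. c \<alpha> * Pm y \<alpha>)
     = c (\<lambda>_. 0) + (\<Sum>i\<in>UNIV. c (dl i) * complex_of_real (y $ i))"
proof -
  have n0: "(\<lambda>_. 0) \<notin> range (dl :: 'n \<Rightarrow> _)"
  proof
    assume "(\<lambda>_. 0) \<in> range (dl :: 'n \<Rightarrow> _)"
    then obtain i :: 'n where "(\<lambda>_. 0) = dl i" by blast
    then have "(\<lambda>_. 0::nat) i = dl i i" by (rule fun_cong)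
    then show False by (simp add: dl_def)
  qed
  have "(\<Sum>\<alpha>\<in>insert (\<lambda>_. 0) (range dl). c \<alpha> * Pm y \<alpha>) = c (\<lambda>_. 0) * Pm y (\<lambda>_. 0) + (\<Sum>\<alpha>\<in>range dl. c \<alpha> * Pm y \<alpha>)"
    using n0 by (simp add: sum.insert)
  also have "(\<Sum>\<alpha>\<in>range dl. c \<alpha> * Pm y \<alpha>) = (\<Sum>i\<in>UNIV. c (dl i) * Pm y (dl i))"
    by (subst sum.reindex[OF inj_dl]) (simp add: o_def)
  finally show ?thesis unfolding low_set by (simp add: Pm_0 Pm_dl)
qed

lemma lin_D: "bounded_linear (\<lambda>h :: real ^ 'n::finite. \<Sum>i\<in>UNIV. c i * complex_of_real (h $ i))"
proof -
  have "linear (\<lambda>h :: real ^ 'n::finite. \<Sum>i\<in>UNIV. c i * complex_of_real (h $ i))"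
    by (rule linearI) (simp_all add: sum.distrib algebra_simps scaleR_conv_of_real[where 'a=complex] sum_distrib_left)
  then show ?thesis by (simp add: linear_conv_bounded_linear)
qed

lemma analytic_has_derivative:
  fixes f :: "real ^ 'n::finite \<Rightarrow> complex"
  assumes "real_analytic f"
  shows "\<exists>D. (f has_derivative D) (at a)"
proof -
  obtain r c where r: "r > 0" and hs: "\<And>x. dist x a < r \<Longrightarrow>
      ((\<lambda>\<alpha>. c \<alpha> * (\<Prod>i\<in>UNIV. complex_of_real (x $ i - a $ i) ^ \<alpha> i)) has_sum f x) UNIV"
    using assms unfolding real_analytic_def by blast
  have hs': "((\<lambda>\<alpha>. c \<alpha> * Pm h \<alpha>) has_sum f (a + h)) UNIV" if "norm h < r" for h
    using hs[of "a + h"] that by (simp add: Pm_def dist_norm)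
  define s where "s = r / (2 * real CARD('n))"
  have s: "s > 0" using r by (simp add: s_def)
  have ns: "norm (\<chi> i::'n. s) < r"
  proof -
    have "norm (\<chi> i::'n. s) \<le> (\<Sum>i\<in>UNIV. \<bar>(\<chi> i::'n. s) $ i\<bar>)" by (rule norm_le_l1_cart)
    also have "\<dots> = real CARD('n) * s" using s by simp
    also have "\<dots> = r / 2" unfolding s_def by simp
    finally show ?thesis using r by simp
  qed
  have sr: "s < r" using ns component_le_norm_cart[of "\<chi> i::'n. s" undefined] s by simp
  have g: "(\<lambda>\<alpha>. norm (c \<alpha>) * s ^ deg \<alpha>) summable_on UNIV"
    by (rule abs_sum_from_const[OF s]) (use hs'[OF ns] in \<open>auto simp: summable_on_def\<close>)
  obtain K where K: "\<And>y. norm y \<le> s \<Longrightarrow>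
     norm (infsum (\<lambda>\<alpha>. c \<alpha> * Pm y \<alpha>) {\<alpha>. 2 \<le> deg \<alpha>}) \<le> K * norm y ^ 2"
    using remainder_bound[OF s g] by blast
  define D where "D h = (\<Sum>i\<in>UNIV. c (dl i) * complex_of_real (h $ i))" for h :: "real ^ 'n"
  have split: "f (a + h) = c (\<lambda>_. 0) + D h + infsum (\<lambda>\<alpha>. c \<alpha> * Pm h \<alpha>) {\<alpha>. 2 \<le> deg \<alpha>}"
    if h: "norm h \<le> s" for h
  proof -
    have fin: "finite {\<alpha> :: 'n \<Rightarrow> nat. \<not> 2 \<le> deg \<alpha>}" unfolding low_set by simp
    have sH: "(\<lambda>\<alpha>. c \<alpha> * Pm h \<alpha>) summable_on {\<alpha>. 2 \<le> deg \<alpha>}"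
      by (rule abs_summable_summable[OF summable_small[OF s g h]])
    have "f (a + h) = infsum (\<lambda>\<alpha>. c \<alpha> * Pm h \<alpha>) UNIV"
      using hs'[of h] h sr by (simp add: infsumI)
    also have "UNIV = {\<alpha> :: 'n \<Rightarrow> nat. \<not> 2 \<le> deg \<alpha>} \<union> {\<alpha>. 2 \<le> deg \<alpha>}" by auto
    also have "infsum (\<lambda>\<alpha>. c \<alpha> * Pm h \<alpha>) \<dots> =
        infsum (\<lambda>\<alpha>. c \<alpha> * Pm h \<alpha>) {\<alpha> :: 'n \<Rightarrow> nat. \<not> 2 \<le> deg \<alpha>} + infsum (\<lambda>\<alpha>. c \<alpha> * Pm h \<alpha>) {\<alpha>. 2 \<le> deg \<alpha>}"
      by (rule infsum_Un_disjoint) (use fin sH in auto)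
    also have "infsum (\<lambda>\<alpha>. c \<alpha> * Pm h \<alpha>) {\<alpha> :: 'n \<Rightarrow> nat. \<not> 2 \<le> deg \<alpha>} = c (\<lambda>_. 0) + D h"
      using fin by (simp add: low_sum D_def)
    finally show ?thesis .
  qed
  have fa: "f a = c (\<lambda>_. 0)"
  proof -
    have "norm (infsum (\<lambda>\<alpha>. c \<alpha> * Pm 0 \<alpha>) {\<alpha>. 2 \<le> deg \<alpha>}) \<le> 0" using K[of 0] s by simp
    then show ?thesis using split[of 0] s by (simp add: D_def)
  qed
  have "(f has_derivative D) (at a)"
    unfolding has_derivative_at_alt
  proof (intro conjI allI impI)
    show "bounded_linear D" unfolding D_def by (rule lin_D)
  next
    fix e :: real assume e: "e > 0"
    define d where "d = min s (e / (\<bar>K\<bar> + 1))"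
    have d: "d > 0" using s e by (simp add: d_def)
    show "\<exists>d>0. \<forall>y. norm (y - a) < d \<longrightarrow> norm (f y - f a - D (y - a)) \<le> e * norm (y - a)"
    proof (intro exI[of _ d] conjI allI impI d)
      fix y assume y: "norm (y - a) < d"
      define h where "h = y - a"
      have hs1: "norm h \<le> s" using y by (simp add: h_def d_def)
      have hs2: "norm h * (\<bar>K\<bar> + 1) \<le> e" using y e by (simp add: h_def d_def field_simps)
      have "f y - f a - D (y - a) = infsum (\<lambda>\<alpha>. c \<alpha> * Pm h \<alpha>) {\<alpha>. 2 \<le> deg \<alpha>}"
        using split[OF hs1] fa by (simp add: h_def)
      then have "norm (f y - f a - D (y - a)) \<le> K * norm h ^ 2" using K[OF hs1] by simp
      also have "\<dots> \<le> (\<bar>K\<bar> + 1) * norm h * norm h"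
        using mult_right_mono[of K "\<bar>K\<bar>+1" "norm h * norm h"] by (simp add: power2_eq_square mult.assoc)
      also have "\<dots> \<le> e * norm h"
        using mult_right_mono[OF hs2 norm_ge_zero[of h]] by (simp add: algebra_simps)
      finally show "norm (f y - f a - D (y - a)) \<le> e * norm (y - a)" by (simp add: h_def)
    qed
  qed
  then show ?thesis using has_derivative_at_alt by blast
qed


lemma axis_comp: "axis k (x::real) $ i = (if i = k then x else 0)"
  by (simp add: axis_def)

locale pairs =
  fixes ix :: "nat \<Rightarrow> 'n::finite"
  assumes bij: "bij_betw ix {..<CARD('n)} UNIV"
begin

abbreviation "A j \<equiv> ix (2 * j)"
abbreviation "B j \<equiv> ix (Suc (2 * j))"

lemma inj: "inj_on ix {..<CARD('n)}" using bij by (simp add: bij_betw_def)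

lemma A_eq: "j < CARD('n) div 2 \<Longrightarrow> l < CARD('n) div 2 \<Longrightarrow> A l = A j \<longleftrightarrow> l = j"
  using inj by (auto simp: inj_on_eq_iff)

lemma B_eq: "j < CARD('n) div 2 \<Longrightarrow> l < CARD('n) div 2 \<Longrightarrow> B l = B j \<longleftrightarrow> l = j"
  using inj by (auto simp: inj_on_eq_iff)

lemma AB_ne2: "j < CARD('n) div 2 \<Longrightarrow> l < CARD('n) div 2 \<Longrightarrow> A l \<noteq> B j"
  using inj by (auto simp: inj_on_eq_iff; presburger)

lemma AB_ne: "j < CARD('n) div 2 \<Longrightarrow> A j \<noteq> B j"
  using AB_ne2 by blast

definition alpha :: "nat \<Rightarrow> real ^ 'n" where
  "alpha j = axis (A j) 1 - axis (B j) 1"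

lemma alpha_A: "j < CARD('n) div 2 \<Longrightarrow> l < CARD('n) div 2 \<Longrightarrow> alpha j $ A l = (if l = j then 1 else 0)"
  unfolding alpha_def using A_eq[of j l] AB_ne2[of j l] AB_ne2[of l j] AB_ne2[of j j] AB_ne2[of l l]
  by (auto simp: axis_comp)

lemma alpha_B: "j < CARD('n) div 2 \<Longrightarrow> l < CARD('n) div 2 \<Longrightarrow> alpha j $ B l = (if l = j then -1 else 0)"
  unfolding alpha_def using B_eq[of j l] AB_ne2[of j l] AB_ne2[of l j] AB_ne2[of j j] AB_ne2[of l l]
  by (auto simp: axis_comp)

lemma alpha_other: "i \<noteq> A j \<Longrightarrow> i \<noteq> B j \<Longrightarrow> alpha j $ i = 0"
  unfolding alpha_def by (simp add: axis_comp)

lemma comp_sum_A: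
  assumes "k \<le> CARD('n) div 2" "l < CARD('n) div 2"
  shows "(\<Sum>j<k. c j *\<^sub>R alpha j) $ A l = (if l < k then c l else 0)"
proof -
  have "(\<Sum>j<k. c j *\<^sub>R alpha j) $ A l = (\<Sum>j<k. if l = j then c j else 0)"
    unfolding sum_component using assms by (intro sum.cong refl) (simp add: alpha_A)
  also have "\<dots> = (if l < k then c l else 0)" by (simp add: sum.delta')
  finally show ?thesis .
qed

lemma comp_sum_B:
  assumes "k \<le> CARD('n) div 2" "l < CARD('n) div 2"
  shows "(\<Sum>j<k. c j *\<^sub>R alpha j) $ B l = (if l < k then - c l else 0)"
proof -
  have "(\<Sum>j<k. c j *\<^sub>R alpha j) $ B l = (\<Sum>j<k. if l = j then - c j else 0)"
    unfolding sum_component using assms by (intro sum.cong refl) (simp add: alpha_B)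
  also have "\<dots> = (if l < k then - c l else 0)" by (simp add: sum.delta')
  finally show ?thesis .
qed

lemma comp_sum_other:
  assumes "\<And>j. j < k \<Longrightarrow> i \<noteq> A j \<and> i \<noteq> B j"
  shows "(\<Sum>j<k. c j *\<^sub>R alpha j) $ i = 0"
  unfolding sum_component using assms by (intro sum.neutral) (simp add: alpha_other)

lemma h0_eq: "h0 ix x = x - (\<Sum>j<CARD('n) div 2. ((x $ A j - x $ B j) / 2) *\<^sub>R alpha j)"
  unfolding h0_def alpha_def by simp

lemma h0_sym: "l < CARD('n) div 2 \<Longrightarrow> h0 ix x $ A l = h0 ix x $ B l"
proof -
  assume l: "l < CARD('n) div 2"
  define c where "c j = (x $ A j - x $ B j) / 2" for j
  have hx: "h0 ix x = x - (\<Sum>j<CARD('n) div 2. c j *\<^sub>R alpha j)" unfolding h0_eq c_def ..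
  have a: "h0 ix x $ A l = x $ A l - c l"
    unfolding hx vector_minus_component comp_sum_A[OF le_refl l] using l by simp
  have b: "h0 ix x $ B l = x $ B l + c l"
    unfolding hx vector_minus_component comp_sum_B[OF le_refl l] using l by simp
  show ?thesis using a b by (simp add: c_def field_simps)
qed

lemma pair_alpha: "j < CARD('n) div 2 \<Longrightarrow> l < CARD('n) div 2 \<Longrightarrow> alpha j $ A l - alpha j $ B l = (if l = j then 2 else 0)"
  by (simp add: alpha_A alpha_B)

lemma pairing_alpha: "j < CARD('n) div 2 \<Longrightarrow> (\<Sum>i\<in>UNIV. lam $ i * complex_of_real (alpha j $ i)) = lam $ A j - lam $ B j"
  unfolding alpha_def using AB_ne[of j]
  by (simp add: axis_comp of_real_diff right_diff_distrib sum_subtractf if_distrib[of complex_of_real]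
      if_distrib[of "(*) _"] sum.delta cong: if_cong)

end


locale uniq = pairs ix for ix :: "nat \<Rightarrow> 'n::finite" +
  fixes \<kappa> :: "nat \<Rightarrow> real" and lam :: "complex ^ 'n" and f :: "real ^ 'n \<Rightarrow> complex"
  assumes kpos: "\<forall>j < CARD('n) div 2. \<kappa> j > 0"
    and an: "real_analytic f"
    and eq: "\<forall>\<zeta> x. T_op ix \<kappa> f \<zeta> x = \<i> * pairing lam \<zeta> * f x"
    and f0: "f 0 = 1"
begin

definition Df :: "real ^ 'n \<Rightarrow> real ^ 'n \<Rightarrow> complex" where
  "Df x = frechet_derivative f (at x)"

definition pr :: "real ^ 'n \<Rightarrow> complex" where
  "pr v = (\<Sum>i\<in>UNIV. lam $ i * complex_of_real (v $ i))"

lemma hd: "(f has_derivative Df x) (at x)"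
  unfolding Df_def using analytic_has_derivative[OF an, of x] frechet_derivative_works
  by (auto simp: differentiable_def)

lemma bl: "bounded_linear (Df x)" using hd by (rule has_derivative_bounded_linear)

lemma fcont: "isCont f x" using hd has_derivative_continuous by blast

lemma dir: "Df x \<xi> + (\<Sum>j<CARD('n) div 2. complex_of_real (\<kappa> j * (\<xi> $ A j - \<xi> $ B j)) *
     diff_quot f (A j) (B j) x) = \<i> * pr \<xi> * f x"
proof -
  define \<zeta> where "\<zeta> = (\<chi> i. complex_of_real (\<xi> $ i))"
  have r: "(\<chi> i. Re (\<zeta> $ i)) = \<xi>" unfolding \<zeta>_def by (simp add: vec_eq_iff)
  have im: "(\<chi> i. Im (\<zeta> $ i)) = 0" unfolding \<zeta>_def by (simp add: vec_eq_iff)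
  have t0: "T_real ix \<kappa> f 0 x = 0"
    unfolding T_real_def dir_deriv_def Df_def[symmetric] using linear_simps(3)[OF bl[of x]] by simp
  have "T_op ix \<kappa> f \<zeta> x = T_real ix \<kappa> f \<xi> x" unfolding T_op_def r im t0 by simp
  moreover have "pairing lam \<zeta> = pr \<xi>" unfolding pairing_def pr_def \<zeta>_def by simp
  ultimately have "T_real ix \<kappa> f \<xi> x = \<i> * pr \<xi> * f x" using eq by metis
  then show ?thesis unfolding T_real_def dir_deriv_def Df_def[symmetric] by simp
qed

lemma shift:
  assumes sym: "\<And>l. l < CARD('n) div 2 \<Longrightarrow> v $ A l = v $ B l"
  shows "f (p + v) = exp (\<i> * pr v) * f p"
proof -
  have Dv: "Df y v = \<i> * pr v * f y" for y
    using dir[of y v] sym by simp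
  define \<phi> where "\<phi> t = f (p + t *\<^sub>R v) * exp (- (\<i> * pr v * complex_of_real t))" for t
  have d: "(\<phi> has_derivative (\<lambda>h. 0)) (at t within UNIV)" for t
  proof -
    have g: "((\<lambda>t. p + t *\<^sub>R v) has_derivative (\<lambda>h. h *\<^sub>R v)) (at t)"
      by (auto intro!: derivative_eq_intros)
    have "((\<lambda>t. f (p + t *\<^sub>R v)) has_derivative (\<lambda>h. Df (p + t *\<^sub>R v) (h *\<^sub>R v))) (at t)"
      by (rule has_derivative_compose[OF g hd])
    then have d1: "((\<lambda>t. f (p + t *\<^sub>R v)) has_vector_derivative Df (p + t *\<^sub>R v) v) (at t)"
      unfolding has_vector_derivative_def using linear_simps(5)[OF bl] by simp
    have "((\<lambda>z. exp (- (\<i> * pr v * z))) has_field_derivative (exp (- (\<i> * pr v * of_real t)) * (- (\<i> * pr v)))) (at (of_real t))"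
      by (auto intro!: derivative_eq_intros)
    from has_vector_derivative_real_field[OF this]
    have d2: "((\<lambda>t. exp (- (\<i> * pr v * complex_of_real t))) has_vector_derivative (exp (- (\<i> * pr v * of_real t)) * (- (\<i> * pr v)))) (at t)" .
    have "(\<phi> has_vector_derivative (f (p + t *\<^sub>R v) * (exp (- (\<i> * pr v * of_real t)) * (- (\<i> * pr v))) +
          Df (p + t *\<^sub>R v) v * exp (- (\<i> * pr v * complex_of_real t)))) (at t)"
      unfolding \<phi>_def by (rule has_vector_derivative_mult[OF d1 d2])
    then have "(\<phi> has_vector_derivative 0) (at t)" unfolding Dv by (simp add: algebra_simps)
    then show ?thesis unfolding has_vector_derivative_def by simp
  qed
  obtain c where c: "\<And>t. \<phi> t = c" using has_derivative_zero_constant[of UNIV \<phi>] d by auto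
  have "\<phi> 1 = \<phi> 0" using c by simp
  then have "f (p + v) * exp (- (\<i> * pr v)) = f p" unfolding \<phi>_def by simp
  then show ?thesis by (simp add: exp_minus field_simps)
qed

end


context uniq
begin

definition u :: "real ^ 'n \<Rightarrow> nat \<Rightarrow> real" where
  "u x j = x $ A j - x $ B j"

definition aa :: "nat \<Rightarrow> complex" where
  "aa j = \<i> / 2 * (lam $ A j - lam $ B j)"

definition W :: "real ^ 'n \<Rightarrow> nat \<Rightarrow> real ^ 'n" where
  "W x k = (\<Sum>j<k. (u x j / 2) *\<^sub>R alpha j)"

lemma pair_step:
  assumes k: "k < CARD('n) div 2"
  shows "f (W x (Suc k)) = f (W x k) * M1 (\<kappa> k) (aa k * complex_of_real (u x k))"
proof -
  define p where "p = W x k"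
  define y where "y t = p + (t / 2) *\<^sub>R alpha k" for t
  define q where "q t = f (y t)" for t
  have kle: "k \<le> CARD('n) div 2" using k by simp
  have pA: "p $ A k = 0" unfolding p_def W_def comp_sum_A[OF kle k] by simp
  have pB: "p $ B k = 0" unfolding p_def W_def comp_sum_B[OF kle k] by simp
  have yA: "y t $ A k = t / 2" for t unfolding y_def using pA alpha_A[OF k k] by simp
  have yB: "y t $ B k = - t / 2" for t unfolding y_def using pB alpha_B[OF k k] by simp
  have tau: "tau_pair (A k) (B k) (y t) = p" for t
    unfolding tau_pair_def vec_eq_iff
  proof
    fix i
    show "(\<chi> i. if i = A k \<or> i = B k then (y t $ A k + y t $ B k) / 2 else y t $ i) $ i = p $ i"
    proof (cases "i = A k \<or> i = B k")
      case True then show ?thesis using pA pB by (auto simp: yA yB)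
    next
      case False then show ?thesis unfolding y_def using alpha_other[of i k] by simp
    qed
  qed
  have y0: "y 0 = p" unfolding y_def by simp
  have WS: "W x (Suc k) = y (u x k)" unfolding W_def y_def p_def sum.lessThan_Suc by (rule refl)
  have kk: "\<kappa> k > 0" using kpos k by simp
  have ode: "q t = q 0 * M1 (\<kappa> k) (aa k * complex_of_real t)" for t
  proof (rule ode_unique[OF kk])
    have "isCont y 0" unfolding y_def by (intro continuous_intros) auto
    then show "isCont q 0" unfolding q_def by (rule isCont_o2) (rule fcont)
  next
    fix t :: real assume t: "t \<noteq> 0"
    have dy: "(y has_derivative (\<lambda>h. h *\<^sub>R ((1/2) *\<^sub>R alpha k))) (at t)"
      unfolding y_def by (auto intro!: derivative_eq_intros simp: scaleR_scaleR)
    have "(q has_derivative (\<lambda>h. Df (y t) (h *\<^sub>R ((1/2) *\<^sub>R alpha k)))) (at t)"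
      unfolding q_def by (rule has_derivative_compose[OF dy hd])
    then have dq: "(q has_vector_derivative (complex_of_real (1/2) * Df (y t) (alpha k))) (at t)"
      unfolding has_vector_derivative_def using linear_simps(5)[OF bl]
      by (simp add: scaleR_conv_of_real)
    have sumeq: "(\<Sum>j<CARD('n) div 2. complex_of_real (\<kappa> j * (alpha k $ A j - alpha k $ B j)) *
        diff_quot f (A j) (B j) (y t)) = complex_of_real (\<kappa> k * 2) * diff_quot f (A k) (B k) (y t)"
    proof -
      have "(\<Sum>j<CARD('n) div 2. complex_of_real (\<kappa> j * (alpha k $ A j - alpha k $ B j)) *
        diff_quot f (A j) (B j) (y t)) = (\<Sum>j<CARD('n) div 2. if j = k then complex_of_real (\<kappa> k * 2) * diff_quot f (A k) (B k) (y t) else 0)"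
        by (intro sum.cong refl) (simp add: pair_alpha[OF k])
      also have "\<dots> = complex_of_real (\<kappa> k * 2) * diff_quot f (A k) (B k) (y t)" using k by simp
      finally show ?thesis .
    qed
    have d: "y t $ A k - y t $ B k = t" using yA[of t] yB[of t] by simp
    have ne: "y t $ A k \<noteq> y t $ B k" using d t by auto
    have "diff_quot f (A k) (B k) (y t) = (f (y t) - f (tau_pair (A k) (B k) (y t))) / complex_of_real (y t $ A k - y t $ B k)"
      unfolding diff_quot_def Let_def using ne by (simp only: if_True not_False_eq_True)
    then have dqt: "diff_quot f (A k) (B k) (y t) = (q t - q 0) / complex_of_real t"
      unfolding q_def y0 by (simp only: d tau)
    have "Df (y t) (alpha k) + complex_of_real (\<kappa> k * 2) * ((q t - q 0) / complex_of_real t)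
          = \<i> * (lam $ A k - lam $ B k) * q t"
      using dir[of "y t" "alpha k"] unfolding sumeq dqt pr_def pairing_alpha[OF k] q_def by simp
    then have e: "complex_of_real (1/2) * Df (y t) (alpha k)
        = aa k * q t - complex_of_real (\<kappa> k) * (q t - q 0) / complex_of_real t"
      unfolding aa_def by (simp add: field_simps)
    from dq show "(q has_vector_derivative (aa k * q t - complex_of_real (\<kappa> k) * (q t - q 0) / complex_of_real t)) (at t)"
      unfolding e .
  qed
  have "f (W x (Suc k)) = q (u x k)" unfolding WS q_def ..
  also have "\<dots> = f p * M1 (\<kappa> k) (aa k * complex_of_real (u x k))" using ode[of "u x k"] y0 by (simp add: q_def)
  finally show ?thesis unfolding p_def .
qed

lemma W_formula: "k \<le> CARD('n) div 2 \<Longrightarrow> f (W x k) = (\<Prod>j<k. M1 (\<kappa> j) (aa j * complex_of_real (u x j)))"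
proof (induction k)
  case 0 then show ?case by (simp add: W_def f0)
next
  case (Suc k) then show ?case by (simp add: pair_step)
qed

lemma unique: "f = M_kernel ix \<kappa> lam"
proof
  fix x
  have hx: "h0 ix x = x - W x (CARD('n) div 2)" unfolding h0_eq W_def u_def ..
  have "f x = f (W x (CARD('n) div 2) + h0 ix x)" by (simp add: hx)
  also have "\<dots> = exp (\<i> * pr (h0 ix x)) * f (W x (CARD('n) div 2))"
    by (rule shift) (rule h0_sym)
  also have "\<dots> = M_kernel ix \<kappa> lam x"
    unfolding M_kernel_def W_formula[OF le_refl] pr_def pairing_def aa_def u_def by simp
  finally show "f x = M_kernel ix \<kappa> lam x" .
qed

end


lemma Hs_deriv: "k \<ge> 0 \<Longrightarrow> isCont (Hs k) z"
proof -
  assume k: "k \<ge> 0"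
  have "((\<lambda>z. \<Sum>n. cM k (Suc n) * z ^ n) has_field_derivative (\<Sum>n. diffs (\<lambda>n. cM k (Suc n)) n * z ^ n)) (at z)"
    by (rule termdiffs_strong_converges_everywhere, rule cM_Suc_summable[OF k])
  moreover have "Hs k = (\<lambda>z. \<Sum>n. cM k (Suc n) * z ^ n)" by (rule ext) (simp add: Hs_def)
  ultimately show ?thesis using DERIV_isCont by metis
qed

lemma compose_field:
  assumes "bounded_linear l" "(F has_field_derivative F') (at (l x))"
  shows "((\<lambda>x. F (l x)) has_derivative (\<lambda>h. F' * l h)) (at x)"
  using has_derivative_compose[OF bounded_linear_imp_has_derivative[OF assms(1)] assms(2)[unfolded has_field_derivative_def]] .

locale exist = pairs ix for ix :: "nat \<Rightarrow> 'n::finite" +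
  fixes \<kappa> :: "nat \<Rightarrow> real" and lam :: "complex ^ 'n"
  assumes kpos: "\<forall>j < CARD('n) div 2. \<kappa> j > 0"
begin

definition uu :: "real ^ 'n \<Rightarrow> nat \<Rightarrow> real" where "uu x j = x $ A j - x $ B j"
definition ab :: "nat \<Rightarrow> complex" where "ab j = \<i> / 2 * (lam $ A j - lam $ B j)"
definition pr :: "real ^ 'n \<Rightarrow> complex" where "pr v = (\<Sum>i\<in>UNIV. lam $ i * complex_of_real (v $ i))"
definition Lf :: "real ^ 'n \<Rightarrow> complex" where
  "Lf x = \<i> * (\<Sum>i\<in>UNIV. lam $ i * complex_of_real (h0 ix x $ i))"
definition ll :: "nat \<Rightarrow> real ^ 'n \<Rightarrow> complex" where "ll j x = ab j * complex_of_real (uu x j)"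
definition G :: "nat \<Rightarrow> real ^ 'n \<Rightarrow> complex" where "G j x = M1 (\<kappa> j) (ll j x)"
definition Mk :: "real ^ 'n \<Rightarrow> complex" where
  "Mk x = exp (Lf x) * (\<Prod>j<CARD('n) div 2. G j x)"

lemma Mk_eq: "M_kernel ix \<kappa> lam = Mk"
  by (rule ext) (simp add: M_kernel_def Mk_def Lf_def G_def ll_def ab_def uu_def pairing_def)

lemma Lf_formula: "Lf x = \<i> * (pr x - (\<Sum>j<CARD('n) div 2. complex_of_real (uu x j / 2) * (lam $ A j - lam $ B j)))"
proof -
  have "(\<Sum>i\<in>UNIV. lam $ i * complex_of_real (h0 ix x $ i))
      = pr x - (\<Sum>i\<in>UNIV. lam $ i * complex_of_real ((\<Sum>j<CARD('n) div 2. ((x $ A j - x $ B j) / 2) *\<^sub>R alpha j) $ i))"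
    unfolding h0_eq pr_def by (simp add: algebra_simps sum_subtractf)
  also have "(\<Sum>i\<in>UNIV. lam $ i * complex_of_real ((\<Sum>j<CARD('n) div 2. ((x $ A j - x $ B j) / 2) *\<^sub>R alpha j) $ i))
      = (\<Sum>j<CARD('n) div 2. complex_of_real (uu x j / 2) * (\<Sum>i\<in>UNIV. lam $ i * complex_of_real (alpha j $ i)))"
  proof -
    have "(\<Sum>i\<in>UNIV. lam $ i * complex_of_real ((\<Sum>j<CARD('n) div 2. ((x $ A j - x $ B j) / 2) *\<^sub>R alpha j) $ i))
       = (\<Sum>i\<in>UNIV. \<Sum>j<CARD('n) div 2. complex_of_real (uu x j / 2) * (lam $ i * complex_of_real (alpha j $ i)))"
      unfolding sum_component by (simp add: sum_distrib_left uu_def mult_ac)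
    also have "\<dots> = (\<Sum>j<CARD('n) div 2. \<Sum>i\<in>UNIV. complex_of_real (uu x j / 2) * (lam $ i * complex_of_real (alpha j $ i)))"
      by (rule sum.swap)
    also have "\<dots> = (\<Sum>j<CARD('n) div 2. complex_of_real (uu x j / 2) * (\<Sum>i\<in>UNIV. lam $ i * complex_of_real (alpha j $ i)))"
      by (simp add: sum_distrib_left)
    finally show ?thesis .
  qed
  also have "\<dots> = (\<Sum>j<CARD('n) div 2. complex_of_real (uu x j / 2) * (lam $ A j - lam $ B j))"
    by (intro sum.cong refl) (simp add: pairing_alpha)
  finally show ?thesis unfolding Lf_def by simp
qed

lemma bl_pr: "bounded_linear pr"
  unfolding linear_conv_bounded_linear[symmetric] pr_def
  by (rule linearI) (simp_all add: sum.distrib algebra_simps scaleR_conv_of_real[where 'a=complex] sum_distrib_left)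

lemma bl_uu: "bounded_linear (\<lambda>x. complex_of_real (uu x j))"
  unfolding linear_conv_bounded_linear[symmetric] uu_def
  by (rule linearI) (simp_all add: algebra_simps scaleR_conv_of_real[where 'a=complex])

lemma bl_ll: "bounded_linear (ll j)"
  unfolding ll_def by (rule bounded_linear_compose[OF bounded_linear_mult_right bl_uu])

lemma bl_Lf: "bounded_linear Lf"
proof -
  have eq: "Lf = (\<lambda>x. \<i> * (pr x - (\<Sum>j<CARD('n) div 2. (lam $ A j - lam $ B j) / 2 * complex_of_real (uu x j))))"
  proof (rule ext)
    fix x
    have "(\<Sum>j<CARD('n) div 2. complex_of_real (uu x j / 2) * (lam $ A j - lam $ B j))
        = (\<Sum>j<CARD('n) div 2. (lam $ A j - lam $ B j) / 2 * complex_of_real (uu x j))"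
      by (intro sum.cong refl) (simp add: field_simps)
    then show "Lf x = \<i> * (pr x - (\<Sum>j<CARD('n) div 2. (lam $ A j - lam $ B j) / 2 * complex_of_real (uu x j)))"
      unfolding Lf_formula by simp
  qed
  show ?thesis unfolding eq
    by (intro bounded_linear_compose[OF bounded_linear_mult_right] bounded_linear_sub bl_pr
        bounded_linear_sum bounded_linear_compose[OF bounded_linear_mult_right bl_uu])
qed

lemma dE: "((\<lambda>x. exp (Lf x)) has_derivative (\<lambda>h. exp (Lf x) * Lf h)) (at x)"
  by (rule compose_field[OF bl_Lf DERIV_exp])

lemma kj: "j < CARD('n) div 2 \<Longrightarrow> \<kappa> j \<ge> 0" using kpos by (simp add: less_imp_le)

lemma dG: "j < CARD('n) div 2 \<Longrightarrow> (G j has_derivative (\<lambda>h. dM (\<kappa> j) (ll j x) * ll j h)) (at x)"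
  unfolding G_def[abs_def] by (rule compose_field[OF bl_ll M1_deriv[OF kj]])

end


context exist
begin

definition P :: "nat \<Rightarrow> real ^ 'n \<Rightarrow> complex" where
  "P j x = (\<Prod>l\<in>{..<CARD('n) div 2} - {j}. G l x)"

lemma P_G: "j < CARD('n) div 2 \<Longrightarrow> G j x * P j x = (\<Prod>l<CARD('n) div 2. G l x)"
  unfolding P_def by (subst prod.remove[of _ j]) auto

lemma tau_eq: "j < CARD('n) div 2 \<Longrightarrow> tau_pair (A j) (B j) y = y - (uu y j / 2) *\<^sub>R alpha j"
  unfolding tau_pair_def vec_eq_iff
proof
  fix i assume j: "j < CARD('n) div 2"
  show "(\<chi> i. if i = A j \<or> i = B j then (y $ A j + y $ B j) / 2 else y $ i) $ i = (y - (uu y j / 2) *\<^sub>R alpha j) $ i"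
  proof (cases "i = A j \<or> i = B j")
    case True then show ?thesis using alpha_A[OF j j] alpha_B[OF j j] AB_ne[OF j]
      by (auto simp: uu_def field_simps)
  next
    case False then show ?thesis using alpha_other[of i j] by simp
  qed
qed

lemma uu_shift: "j < CARD('n) div 2 \<Longrightarrow> l < CARD('n) div 2 \<Longrightarrow>
   uu (y - c *\<^sub>R alpha j) l = uu y l - (if l = j then 2 * c else 0)"
  using pair_alpha[of j l] unfolding uu_def by (auto simp: algebra_simps)

lemma h0_shift:
  assumes j: "j < CARD('n) div 2"
  shows "h0 ix (y - c *\<^sub>R alpha j) = h0 ix y"
proof -
  have "(\<Sum>l<CARD('n) div 2. (uu (y - c *\<^sub>R alpha j) l / 2) *\<^sub>R alpha l)
      = (\<Sum>l<CARD('n) div 2. (uu y l / 2) *\<^sub>R alpha l - (if l = j then c *\<^sub>R alpha j else 0))"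
    by (intro sum.cong refl) (simp add: uu_shift[OF j] scaleR_diff_left diff_divide_distrib)
  also have "\<dots> = (\<Sum>l<CARD('n) div 2. (uu y l / 2) *\<^sub>R alpha l) - c *\<^sub>R alpha j"
    using j by (simp add: sum_subtractf)
  finally have e: "(\<Sum>l<CARD('n) div 2. (uu (y - c *\<^sub>R alpha j) l / 2) *\<^sub>R alpha l)
      = (\<Sum>l<CARD('n) div 2. (uu y l / 2) *\<^sub>R alpha l) - c *\<^sub>R alpha j" .
  have "h0 ix (y - c *\<^sub>R alpha j) = (y - c *\<^sub>R alpha j) - (\<Sum>l<CARD('n) div 2. (uu (y - c *\<^sub>R alpha j) l / 2) *\<^sub>R alpha l)"
    unfolding h0_eq uu_def ..
  also have "\<dots> = y - (\<Sum>l<CARD('n) div 2. (uu y l / 2) *\<^sub>R alpha l)" unfolding e by simp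
  also have "\<dots> = h0 ix y" unfolding h0_eq uu_def ..
  finally show ?thesis .
qed

lemma Lf_tau: "j < CARD('n) div 2 \<Longrightarrow> Lf (tau_pair (A j) (B j) y) = Lf y"
  unfolding Lf_def tau_eq by (simp add: h0_shift)

lemma G_tau: "j < CARD('n) div 2 \<Longrightarrow> l < CARD('n) div 2 \<Longrightarrow>
    G l (tau_pair (A j) (B j) y) = (if l = j then 1 else G l y)"
  unfolding tau_eq G_def ll_def by (simp add: uu_shift M1_0)

lemma P_tau: "j < CARD('n) div 2 \<Longrightarrow> P j (tau_pair (A j) (B j) y) = P j y"
  unfolding P_def by (intro prod.cong refl) (simp add: G_tau)

definition Q :: "nat \<Rightarrow> real ^ 'n \<Rightarrow> complex" where
  "Q j x = exp (Lf x) * P j x * (ab j * Hs (\<kappa> j) (ll j x))"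

lemma q_eq:
  assumes j: "j < CARD('n) div 2" and ne: "y $ A j \<noteq> y $ B j"
  shows "(Mk y - Mk (tau_pair (A j) (B j) y)) / complex_of_real (y $ A j - y $ B j) = Q j y"
proof -
  have u0: "complex_of_real (uu y j) \<noteq> 0" using ne by (simp add: uu_def)
  have "Mk y = exp (Lf y) * P j y * G j y" unfolding Mk_def P_G[OF j, symmetric] by simp
  moreover have "Mk (tau_pair (A j) (B j) y) = exp (Lf y) * P j y"
    unfolding Mk_def P_G[OF j, symmetric] using j by (simp add: Lf_tau P_tau G_tau)
  moreover have "G j y - 1 = ab j * complex_of_real (uu y j) * Hs (\<kappa> j) (ll j y)"
    unfolding G_def using M1_minus1[OF kj[OF j]] by (simp add: ll_def)
  ultimately have "Mk y - Mk (tau_pair (A j) (B j) y) = complex_of_real (uu y j) * Q j y"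
    unfolding Q_def by (simp add: algebra_simps)
  then show ?thesis using u0 by (simp add: uu_def)
qed

lemma contE: "isCont (\<lambda>x. exp (Lf x)) x" using dE has_derivative_continuous by blast
lemma contG: "j < CARD('n) div 2 \<Longrightarrow> isCont (G j) x" using dG has_derivative_continuous by blast
lemma contP: "j < CARD('n) div 2 \<Longrightarrow> isCont (P j) x"
  unfolding P_def[abs_def] by (intro continuous_intros contG) auto
lemma contQ: "j < CARD('n) div 2 \<Longrightarrow> isCont (Q j) x"
proof -
  assume j: "j < CARD('n) div 2"
  have "isCont (ll j) x" using bl_ll by (simp add: linear_continuous_at)
  then have "isCont (\<lambda>x. Hs (\<kappa> j) (ll j x)) x" by (rule isCont_o2) (rule Hs_deriv[OF kj[OF j]])
  then show ?thesis unfolding Q_def[abs_def] using contE contP[OF j] linear_continuous_at[OF bl_Lf]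
    by (intro continuous_intros) auto
qed

lemma limpt:
  assumes j: "j < CARD('n) div 2"
  shows "(x::real^'n) islimpt {y. y $ A j \<noteq> y $ B j}"
proof (rule islimpt_approachable[THEN iffD2], intro allI impI)
  fix e :: real assume e: "e > 0"
  define d where "d = (if x $ A j = x $ B j then e/2 else min (e/2) (\<bar>x $ A j - x $ B j\<bar> / 2))"
  have pos: "d > 0" using e by (auto simp: d_def)
  have de: "d < e" using e by (auto simp: d_def)
  define x'' where "x'' = x + d *\<^sub>R axis (A j) 1"
  have c: "x'' $ A j - x'' $ B j = x $ A j - x $ B j + d"
    unfolding x''_def using AB_ne[OF j] by (simp add: axis_comp)
  have "x'' $ A j - x'' $ B j \<noteq> 0"
  proof
    assume "x'' $ A j - x'' $ B j = 0"
    with c have h: "x $ A j - x $ B j = - d" by simp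
    show False
    proof (cases "x $ A j = x $ B j")
      case True then show False using h pos by simp
    next
      case False
      then have "d \<le> \<bar>x $ A j - x $ B j\<bar> / 2" unfolding d_def by (simp only: if_False)
      then show False using h pos by simp
    qed
  qed
  then have "x'' \<in> {y. y $ A j \<noteq> y $ B j}" by simp
  moreover have "x'' \<noteq> x" using pos unfolding x''_def by (auto simp: vec_eq_iff axis_comp)
  moreover have "dist x'' x < e" using pos de unfolding x''_def by (simp add: dist_norm)
  ultimately show "\<exists>x'\<in>{y. y $ A j \<noteq> y $ B j}. x' \<noteq> x \<and> dist x' x < e" by blast
qed

lemma dq_Mk: "j < CARD('n) div 2 \<Longrightarrow> diff_quot Mk (A j) (B j) x = Q j x"
proof -
  assume j: "j < CARD('n) div 2"
  show ?thesis
  proof (cases "x $ A j = x $ B j")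
    case False
    then show ?thesis unfolding diff_quot_def Let_def using q_eq[OF j False] by simp
  next
    case True
    let ?S = "{y. y $ A j \<noteq> y $ B j}"
    let ?q = "\<lambda>y. (Mk y - Mk (tau_pair (A j) (B j) y)) / complex_of_real (y $ A j - y $ B j)"
    have nb: "at x within ?S \<noteq> bot" using limpt[OF j] trivial_limit_within by blast
    have "(Q j \<longlongrightarrow> Q j x) (at x within ?S)"
      by (rule tendsto_within_subset[OF contQ[OF j, unfolded isCont_def] subset_UNIV])
    moreover have "eventually (\<lambda>y. ?q y = Q j y) (at x within ?S)"
      unfolding eventually_at_filter using q_eq[OF j] by auto
    ultimately have "(?q \<longlongrightarrow> Q j x) (at x within ?S)"
      by (simp add: tendsto_cong)
    then have "Lim (at x within ?S) ?q = Q j x" by (rule tendsto_Lim[OF nb])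
    then show ?thesis unfolding diff_quot_def Let_def using True by simp
  qed
qed

end


context exist
begin

definition DMk :: "real ^ 'n \<Rightarrow> real ^ 'n \<Rightarrow> complex" where
  "DMk x h = exp (Lf x) * (\<Sum>j<CARD('n) div 2. dM (\<kappa> j) (ll j x) * ll j h * P j x)
     + exp (Lf x) * Lf h * (\<Prod>j<CARD('n) div 2. G j x)"

lemma dMk: "(Mk has_derivative DMk x) (at x)"
proof -
  have dp: "((\<lambda>x. \<Prod>j<CARD('n) div 2. G j x) has_derivative
      (\<lambda>h. \<Sum>j<CARD('n) div 2. dM (\<kappa> j) (ll j x) * ll j h * P j x)) (at x)"
    unfolding P_def by (rule has_derivative_prod) (rule dG, simp)
  have "((\<lambda>x. exp (Lf x) * (\<Prod>j<CARD('n) div 2. G j x)) has_derivative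
     (\<lambda>h. exp (Lf x) * (\<Sum>j<CARD('n) div 2. dM (\<kappa> j) (ll j x) * ll j h * P j x) +
          exp (Lf x) * Lf h * (\<Prod>j<CARD('n) div 2. G j x))) (at x)"
    by (rule has_derivative_mult[OF dE dp])
  then show ?thesis unfolding Mk_def[abs_def] DMk_def[abs_def] .
qed

lemma ll_uu: "ll j h = ab j * complex_of_real (h $ A j - h $ B j)"
  unfolding ll_def uu_def ..

lemma termj:
  assumes j: "j < CARD('n) div 2"
  shows "exp (Lf x) * (dM (\<kappa> j) (ll j x) * ll j \<xi> * P j x) +
     complex_of_real (\<kappa> j * (\<xi> $ A j - \<xi> $ B j)) * Q j x = Mk x * ll j \<xi>"
proof -
  have i: "dM (\<kappa> j) (ll j x) = M1 (\<kappa> j) (ll j x) - complex_of_real (\<kappa> j) * Hs (\<kappa> j) (ll j x)"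
    using M1_ident[OF kj[OF j]] by (simp add: algebra_simps)
  have "Mk x = exp (Lf x) * (G j x * P j x)"
    unfolding Mk_def P_G[OF j] ..
  then have mk: "Mk x = exp (Lf x) * (M1 (\<kappa> j) (ll j x) * P j x)"
    by (simp only: G_def)
  show ?thesis unfolding i mk Q_def ll_uu[of j \<xi>] by (simp add: algebra_simps)
qed

lemma Lf_ll: "Lf \<xi> + (\<Sum>j<CARD('n) div 2. ll j \<xi>) = \<i> * pr \<xi>"
proof -
  have "(\<Sum>j<CARD('n) div 2. ll j \<xi>) = \<i> * (\<Sum>j<CARD('n) div 2. complex_of_real (uu \<xi> j / 2) * (lam $ A j - lam $ B j))"
    unfolding ll_def ab_def sum_distrib_left by (intro sum.cong refl) (simp add: field_simps)
  then show ?thesis unfolding Lf_formula by (simp add: algebra_simps)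
qed

lemma T_real_Mk: "T_real ix \<kappa> Mk \<xi> x = \<i> * pr \<xi> * Mk x"
proof -
  have fd: "frechet_derivative Mk (at x) = DMk x" using frechet_derivative_at[OF dMk] by simp
  have "T_real ix \<kappa> Mk \<xi> x = DMk x \<xi> + (\<Sum>j<CARD('n) div 2. complex_of_real (\<kappa> j * (\<xi> $ A j - \<xi> $ B j)) * Q j x)"
    unfolding T_real_def dir_deriv_def fd by (simp add: dq_Mk)
  also have "\<dots> = (\<Sum>j<CARD('n) div 2. exp (Lf x) * (dM (\<kappa> j) (ll j x) * ll j \<xi> * P j x) +
        complex_of_real (\<kappa> j * (\<xi> $ A j - \<xi> $ B j)) * Q j x) + exp (Lf x) * Lf \<xi> * (\<Prod>j<CARD('n) div 2. G j x)"
    unfolding DMk_def sum.distrib sum_distrib_left by (simp add: algebra_simps)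
  also have "\<dots> = (\<Sum>j<CARD('n) div 2. Mk x * ll j \<xi>) + Mk x * Lf \<xi>"
  proof -
    have "(\<Sum>j<CARD('n) div 2. exp (Lf x) * (dM (\<kappa> j) (ll j x) * ll j \<xi> * P j x) +
        complex_of_real (\<kappa> j * (\<xi> $ A j - \<xi> $ B j)) * Q j x) = (\<Sum>j<CARD('n) div 2. Mk x * ll j \<xi>)"
      by (intro sum.cong refl termj) simp
    moreover have "exp (Lf x) * Lf \<xi> * (\<Prod>j<CARD('n) div 2. G j x) = Mk x * Lf \<xi>"
      unfolding Mk_def by (simp add: algebra_simps)
    ultimately show ?thesis by simp
  qed
  also have "\<dots> = Mk x * (Lf \<xi> + (\<Sum>j<CARD('n) div 2. ll j \<xi>))" by (simp add: sum_distrib_left algebra_simps)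
  also have "\<dots> = \<i> * pr \<xi> * Mk x" unfolding Lf_ll by simp
  finally show ?thesis .
qed

lemma T_op_Mk: "T_op ix \<kappa> Mk \<zeta> x = \<i> * pairing lam \<zeta> * Mk x"
proof -
  have "pairing lam \<zeta> = pr (\<chi> i. Re (\<zeta> $ i)) + \<i> * pr (\<chi> i. Im (\<zeta> $ i))"
    unfolding pairing_def pr_def
    by (subst complex_eq[of "\<zeta> $ i" for i]) (simp add: algebra_simps sum.distrib sum_distrib_left)
  then show ?thesis unfolding T_op_def T_real_Mk by (simp add: algebra_simps)
qed

end


definition cnt :: "nat \<Rightarrow> (nat \<Rightarrow> 'n) \<Rightarrow> 'n \<Rightarrow> nat" where
  "cnt n \<phi> i = card {k \<in> {..<n}. \<phi> k = i}"

definition Sn :: "nat \<Rightarrow> (nat \<Rightarrow> 'n) set" where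
  "Sn n = PiE {..<n} (\<lambda>_. UNIV)"

definition fib :: "nat \<Rightarrow> ('n \<Rightarrow> nat) \<Rightarrow> (nat \<Rightarrow> 'n) set" where
  "fib n \<alpha> = {\<phi> \<in> Sn n. cnt n \<phi> = \<alpha>}"

definition layer :: "nat \<Rightarrow> ('n::finite \<Rightarrow> nat) set" where
  "layer n = {\<alpha>. deg \<alpha> = n}"

lemma finite_bounded_funs: "finite {\<alpha> :: 'n::finite \<Rightarrow> nat. \<forall>i. \<alpha> i \<le> b i}"
proof (rule finite_subset)
  show "{\<alpha> :: 'n::finite \<Rightarrow> nat. \<forall>i. \<alpha> i \<le> b i} \<subseteq> PiE UNIV (\<lambda>i. {..b i})" by (auto simp: PiE_iff)
  show "finite (PiE UNIV (\<lambda>i. {..b i}) :: ('n \<Rightarrow> nat) set)" by (rule finite_PiE) auto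
qed

lemma finite_layer: "finite (layer n :: ('n::finite \<Rightarrow> nat) set)"
proof (rule finite_subset[OF _ finite_bounded_funs[of "\<lambda>_. n"]])
  show "layer n \<subseteq> {\<alpha> :: 'n \<Rightarrow> nat. \<forall>i. \<alpha> i \<le> n}"
    unfolding layer_def by (auto intro: member_le_sum[of _ UNIV, simplified])
qed

lemma finite_Sn: "finite (Sn n :: (nat \<Rightarrow> 'n::finite) set)"
  unfolding Sn_def by (rule finite_PiE) auto

lemma deg_cnt: "deg (cnt n (\<phi> :: nat \<Rightarrow> 'n::finite)) = n"
proof -
  have "deg (cnt n \<phi>) = (\<Sum>i\<in>UNIV. \<Sum>k\<in>{k \<in> {..<n}. \<phi> k = i}. (1::nat))"
    unfolding cnt_def by simp
  also have "\<dots> = (\<Sum>k\<in>{..<n}. (1::nat))" by (rule sum.group) auto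
  finally show ?thesis by simp
qed

lemma prod_cnt:
  fixes v :: "'n::finite \<Rightarrow> 'a::comm_monoid_mult" and \<phi> :: "nat \<Rightarrow> 'n"
  shows "(\<Prod>k<n. v (\<phi> k)) = (\<Prod>i\<in>UNIV. v i ^ cnt n \<phi> i)"
proof -
  have "(\<Prod>k<n. v (\<phi> k)) = (\<Prod>i\<in>UNIV. \<Prod>k\<in>{k \<in> {..<n}. \<phi> k = i}. v (\<phi> k))"
    by (rule prod.group[symmetric]) auto
  also have "\<dots> = (\<Prod>i\<in>UNIV. \<Prod>k\<in>{k \<in> {..<n}. \<phi> k = i}. v i)"
    by (intro prod.cong refl) auto
  also have "\<dots> = (\<Prod>i\<in>UNIV. v i ^ cnt n \<phi> i)" unfolding cnt_def by simp
  finally show ?thesis .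
qed

lemma multinom:
  fixes v :: "'n::finite \<Rightarrow> 'a::comm_semiring_1"
  shows "(\<Sum>i\<in>UNIV. v i) ^ n = (\<Sum>\<alpha>\<in>layer n. of_nat (card (fib n \<alpha>)) * (\<Prod>i\<in>UNIV. v i ^ \<alpha> i))"
proof -
  have "(\<Sum>i\<in>UNIV. v i) ^ n = (\<Prod>k<n. \<Sum>i\<in>UNIV. v i)" by simp
  also have "\<dots> = (\<Sum>\<phi>\<in>Sn n. \<Prod>k<n. v (\<phi> k))"
    unfolding Sn_def by (rule prod_sum_PiE) auto
  also have "\<dots> = (\<Sum>\<phi>\<in>Sn n. \<Prod>i\<in>UNIV. v i ^ cnt n \<phi> i)"
    by (intro sum.cong refl prod_cnt)
  also have "\<dots> = (\<Sum>\<alpha>\<in>layer n. \<Sum>\<phi>\<in>{\<phi> \<in> Sn n. cnt n \<phi> = \<alpha>}. \<Prod>i\<in>UNIV. v i ^ cnt n \<phi> i)"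
    by (rule sum.group[symmetric], rule finite_Sn, rule finite_layer, auto simp: layer_def deg_cnt)
  also have "\<dots> = (\<Sum>\<alpha>\<in>layer n. \<Sum>\<phi>\<in>fib n \<alpha>. \<Prod>i\<in>UNIV. v i ^ \<alpha> i)"
    unfolding fib_def by (intro sum.cong refl) auto
  also have "\<dots> = (\<Sum>\<alpha>\<in>layer n. of_nat (card (fib n \<alpha>)) * (\<Prod>i\<in>UNIV. v i ^ \<alpha> i))"
    by simp
  finally show ?thesis .
qed


lemma linear_expand:
  fixes l :: "real ^ 'n::finite \<Rightarrow> complex"
  assumes bl: "bounded_linear l"
  shows "l y = (\<Sum>i\<in>UNIV. l (axis i 1) * complex_of_real (y $ i))"
proof -
  have "y = (\<Sum>i\<in>UNIV. (y $ i) *\<^sub>R axis i 1)"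
    by (simp add: vec_eq_iff axis_def sum_component if_distrib cong: if_cong)
  then have "l y = l (\<Sum>i\<in>UNIV. (y $ i) *\<^sub>R axis i 1)" by simp
  also have "\<dots> = (\<Sum>i\<in>UNIV. (y $ i) *\<^sub>R l (axis i 1))"
    using bl by (simp add: linear_sum[OF bounded_linear.linear[OF bl]] linear_simps(5)[OF bl] o_def)
  also have "\<dots> = (\<Sum>i\<in>UNIV. l (axis i 1) * complex_of_real (y $ i))"
    by (simp add: scaleR_conv_of_real mult.commute)
  finally show ?thesis .
qed

lemma abs_ser:
  fixes g :: "nat \<Rightarrow> complex"
  assumes ser: "\<And>t. summable (\<lambda>n. g n * t ^ n)" and that: "r \<ge> 0"
  shows "summable (\<lambda>n. norm (g n) * r ^ n)"
proof -
  have "summable (\<lambda>n. norm (g n * complex_of_real r ^ n))"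
    by (rule powser_insidea[OF ser[of "complex_of_real (r + 1)"]]) (use that in simp)
  then show ?thesis using that by (simp add: norm_mult norm_power)
qed

lemma analytic_compose:
  fixes F :: "complex \<Rightarrow> complex" and g :: "complex \<Rightarrow> nat \<Rightarrow> complex"
    and l :: "real ^ 'n::finite \<Rightarrow> complex"
  assumes ser: "\<And>z t. (\<lambda>n. g z n * t ^ n) sums F (z + t)"
    and bl: "bounded_linear l"
  shows "real_analytic (\<lambda>x. F (l x))"
  unfolding real_analytic_def
proof (intro allI exI conjI)
  fix a :: "real ^ 'n"
  define z0 where "z0 = l a"
  define gg where "gg = g z0"
  define w where "w i = l (axis i 1)" for i
  define c where "c \<alpha> = gg (deg \<alpha>) * of_nat (card (fib (deg \<alpha>) \<alpha>)) * (\<Prod>i\<in>UNIV. w i ^ \<alpha> i)"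
    for \<alpha> :: "'n \<Rightarrow> nat"
  have sg: "summable (\<lambda>n. gg n * t ^ n)" for t using ser[of z0 t] by (auto simp: gg_def sums_iff)
  show "(1::real) > 0" by simp
  fix x :: "real ^ 'n"
  define y where "y = x - a"
  define t where "t = (\<Sum>i\<in>UNIV. w i * complex_of_real (y $ i))"
  define T where "T = (\<Sum>i\<in>UNIV. norm (w i) * \<bar>y $ i\<bar>)"
  have T0: "T \<ge> 0" unfolding T_def by (intro sum_nonneg) auto
  have lx: "l x = z0 + t"
  proof -
    have "l x = l a + l y" unfolding y_def using linear_simps(2)[OF bl, of x a] by simp
    then show ?thesis unfolding z0_def t_def w_def using linear_expand[OF bl, of y] by simp
  qed
  define h where "h \<alpha> = c \<alpha> * (\<Prod>i\<in>UNIV. complex_of_real (x $ i - a $ i) ^ \<alpha> i)" for \<alpha> :: "'n \<Rightarrow> nat"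
  have hPm: "h \<alpha> = c \<alpha> * Pm y \<alpha>" for \<alpha> unfolding h_def Pm_def y_def by simp
  have layer_sum: "(\<Sum>\<alpha>\<in>layer n. h \<alpha>) = gg n * t ^ n" for n
  proof -
    have "t ^ n = (\<Sum>\<alpha>\<in>layer n. of_nat (card (fib n \<alpha>)) * (\<Prod>i\<in>UNIV. (w i * complex_of_real (y $ i)) ^ \<alpha> i))"
      unfolding t_def by (rule multinom)
    also have "\<dots> = (\<Sum>\<alpha>\<in>layer n. of_nat (card (fib n \<alpha>)) * (\<Prod>i\<in>UNIV. w i ^ \<alpha> i) * Pm y \<alpha>)"
      unfolding Pm_def by (simp add: power_mult_distrib prod.distrib mult.assoc)
    finally have "gg n * t ^ n = (\<Sum>\<alpha>\<in>layer n. gg n * (of_nat (card (fib n \<alpha>)) * (\<Prod>i\<in>UNIV. w i ^ \<alpha> i) * Pm y \<alpha>))"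
      by (simp add: sum_distrib_left)
    also have "\<dots> = (\<Sum>\<alpha>\<in>layer n. h \<alpha>)"
      by (intro sum.cong refl) (simp add: hPm c_def layer_def mult.assoc)
    finally show ?thesis by simp
  qed
  have layer_norm: "(\<Sum>\<alpha>\<in>layer n. norm (h \<alpha>)) = norm (gg n) * T ^ n" for n
  proof -
    have "T ^ n = (\<Sum>\<alpha>\<in>layer n. of_nat (card (fib n \<alpha>)) * (\<Prod>i\<in>UNIV. (norm (w i) * \<bar>y $ i\<bar>) ^ \<alpha> i))"
      unfolding T_def by (rule multinom)
    then have "norm (gg n) * T ^ n = (\<Sum>\<alpha>\<in>layer n. norm (gg n) * (of_nat (card (fib n \<alpha>)) * (\<Prod>i\<in>UNIV. (norm (w i) * \<bar>y $ i\<bar>) ^ \<alpha> i)))"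
      by (simp add: sum_distrib_left)
    also have "\<dots> = (\<Sum>\<alpha>\<in>layer n. norm (h \<alpha>))"
    proof (intro sum.cong refl)
      fix \<alpha> :: "'n \<Rightarrow> nat" assume "\<alpha> \<in> layer n"
      then have d: "deg \<alpha> = n" by (simp add: layer_def)
      show "norm (gg n) * (of_nat (card (fib n \<alpha>)) * (\<Prod>i\<in>UNIV. (norm (w i) * \<bar>y $ i\<bar>) ^ \<alpha> i)) = norm (h \<alpha>)"
        unfolding hPm c_def Pm_def d
        by (simp add: norm_mult prod_norm[symmetric] norm_power power_mult_distrib prod.distrib)
    qed
    finally show ?thesis by simp
  qed
  have sT: "summable (\<lambda>n. norm (gg n) * T ^ n)" by (rule abs_ser[OF sg T0])
  have hn: "(\<lambda>\<alpha>. norm (h \<alpha>)) summable_on UNIV"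
  proof (rule nonneg_bdd_above_summable_on)
    show "bdd_above (sum (\<lambda>\<alpha>. norm (h \<alpha>)) ` {F. F \<subseteq> UNIV \<and> finite F})"
    proof (rule bdd_aboveI2)
      fix F :: "('n \<Rightarrow> nat) set" assume "F \<in> {F. F \<subseteq> UNIV \<and> finite F}"
      then have fF: "finite F" by simp
      define N where "N = Max (insert 0 (deg ` F))"
      define U where "U = {\<alpha> :: 'n \<Rightarrow> nat. deg \<alpha> \<le> N}"
      have fU: "finite U"
        by (rule finite_subset[OF _ finite_bounded_funs[of "\<lambda>_. N"]])
           (auto simp: U_def intro: order_trans[OF member_le_sum[of _ UNIV, simplified]])
      have FU: "F \<subseteq> U" unfolding U_def N_def using fF by (auto intro: Max_ge)
      have "(\<Sum>\<alpha>\<in>F. norm (h \<alpha>)) \<le> (\<Sum>\<alpha>\<in>U. norm (h \<alpha>))" by (rule sum_mono2[OF fU FU]) auto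
      also have "\<dots> = (\<Sum>n\<in>{..N}. \<Sum>\<alpha>\<in>{\<alpha> \<in> U. deg \<alpha> = n}. norm (h \<alpha>))"
        by (rule sum.group[symmetric], rule fU, simp, auto simp: U_def)
      also have "\<dots> = (\<Sum>n\<in>{..N}. norm (gg n) * T ^ n)"
        by (intro sum.cong refl) (auto simp: layer_norm[symmetric] layer_def U_def intro!: sum.cong)
      also have "\<dots> \<le> (\<Sum>n. norm (gg n) * T ^ n)"
        unfolding atMost_atLeast0 atLeast0LessThan[symmetric] lessThan_Suc_atMost[symmetric]
        by (rule sum_le_suminf[OF sT]) (use T0 in auto)
      finally show "(\<Sum>\<alpha>\<in>F. norm (h \<alpha>)) \<le> (\<Sum>n. norm (gg n) * T ^ n)" .
    qed
  qed auto
  have hs: "h summable_on UNIV" using hn by (rule abs_summable_summable)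
  define S where "S = infsum h UNIV"
  have hS: "(h has_sum S) UNIV" unfolding S_def using hs by simp
  have bij: "bij_betw (\<lambda>\<alpha>. (deg \<alpha>, \<alpha>)) UNIV (Sigma UNIV layer)"
    by (rule bij_betwI[where g=snd]) (auto simp: layer_def)
  have "((\<lambda>(n, \<alpha>). h \<alpha>) has_sum S) (Sigma UNIV layer)"
    using hS has_sum_reindex_bij_betw[OF bij, of "\<lambda>(n, \<alpha>). h \<alpha>" S] by simp
  then have "((\<lambda>n. \<Sum>\<alpha>\<in>layer n. h \<alpha>) has_sum S) UNIV"
    by (rule has_sum_Sigma') (simp add: finite_layer)
  then have "(\<lambda>n. gg n * t ^ n) sums S" unfolding layer_sum by (rule has_sum_imp_sums)
  moreover have "(\<lambda>n. gg n * t ^ n) sums F (z0 + t)" unfolding gg_def by (rule ser)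
  ultimately have "S = F (l x)" unfolding lx by (simp add: sums_unique2)
  with hS show "dist x a < 1 \<longrightarrow> ((\<lambda>\<alpha>. c \<alpha> * (\<Prod>i\<in>UNIV. complex_of_real (x $ i - a $ i) ^ \<alpha> i)) has_sum F (l x)) UNIV"
    unfolding h_def by simp
qed


lemma has_sum_prod_pairs:
  fixes p q :: "'a \<Rightarrow> complex"
  assumes hp: "(p has_sum P) UNIV" and hq: "(q has_sum Q) UNIV"
  shows "((\<lambda>(\<alpha>, \<beta>). p \<alpha> * q \<beta>) has_sum P * Q) (UNIV \<times> UNIV)"
proof -
  have np: "(\<lambda>\<alpha>. norm (p \<alpha>)) summable_on UNIV"
    using summable_on_iff_abs_summable_on_complex[THEN iffD1] hp by (auto simp: summable_on_def)
  have nq: "(\<lambda>\<alpha>. norm (q \<alpha>)) summable_on UNIV"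
    using summable_on_iff_abs_summable_on_complex[THEN iffD1] hq by (auto simp: summable_on_def)
  define NQ where "NQ = infsum (\<lambda>\<alpha>. norm (q \<alpha>)) UNIV"
  have "(\<lambda>(\<alpha>, \<beta>). norm (p \<alpha>) * norm (q \<beta>)) summable_on Sigma UNIV (\<lambda>_. UNIV)"
  proof (rule summable_on_SigmaI[where g = "\<lambda>\<alpha>. norm (p \<alpha>) * NQ"])
    show "((\<lambda>\<beta>. case (\<alpha>, \<beta>) of (\<alpha>, \<beta>) \<Rightarrow> norm (p \<alpha>) * norm (q \<beta>)) has_sum norm (p \<alpha>) * NQ) UNIV" for \<alpha>
      unfolding NQ_def using has_sum_cmult_right[OF has_sum_infsum[OF nq], of "norm (p \<alpha>)"] by simp
    show "(\<lambda>\<alpha>. norm (p \<alpha>) * NQ) summable_on UNIV" by (rule summable_on_cmult_left[OF np])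
  qed auto
  then have "(\<lambda>x. norm (case x of (\<alpha>, \<beta>) \<Rightarrow> p \<alpha> * q \<beta>)) summable_on UNIV \<times> UNIV"
    by (rule summable_on_cong[THEN iffD1, rotated]) (auto simp: norm_mult)
  then have s: "(\<lambda>(\<alpha>, \<beta>). p \<alpha> * q \<beta>) summable_on Sigma UNIV (\<lambda>_. UNIV)"
    by (simp add: abs_summable_summable)
  show ?thesis
  proof (rule has_sum_SigmaI[OF _ _ s])
    show "((\<lambda>\<beta>. case (\<alpha>, \<beta>) of (\<alpha>, \<beta>) \<Rightarrow> p \<alpha> * q \<beta>) has_sum p \<alpha> * Q) UNIV" for \<alpha>
      using has_sum_cmult_right[OF hq, of "p \<alpha>"] by simp
    show "((\<lambda>\<alpha>. p \<alpha> * Q) has_sum P * Q) UNIV" by (rule has_sum_cmult_left[OF hp])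
  qed
qed

definition addf :: "('n \<Rightarrow> nat) \<Rightarrow> ('n \<Rightarrow> nat) \<Rightarrow> 'n \<Rightarrow> nat" where
  "addf \<alpha> \<beta> = (\<lambda>i. \<alpha> i + \<beta> i)"

definition fb :: "('n \<Rightarrow> nat) \<Rightarrow> (('n \<Rightarrow> nat) \<times> ('n \<Rightarrow> nat)) set" where
  "fb \<gamma> = {(\<alpha>, \<beta>). addf \<alpha> \<beta> = \<gamma>}"

lemma finite_fb: "finite (fb (\<gamma> :: 'n::finite \<Rightarrow> nat))"
proof (rule finite_subset)
  show "fb \<gamma> \<subseteq> {\<alpha> :: 'n \<Rightarrow> nat. \<forall>i. \<alpha> i \<le> \<gamma> i} \<times> {\<alpha> :: 'n \<Rightarrow> nat. \<forall>i. \<alpha> i \<le> \<gamma> i}"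
    by (auto simp: fb_def addf_def)
  show "finite ({\<alpha> :: 'n \<Rightarrow> nat. \<forall>i. \<alpha> i \<le> \<gamma> i} \<times> {\<alpha> :: 'n \<Rightarrow> nat. \<forall>i. \<alpha> i \<le> \<gamma> i})"
    using finite_bounded_funs by blast
qed

lemma analytic_mult:
  fixes f g :: "real ^ 'n::finite \<Rightarrow> complex"
  assumes af: "real_analytic f" and ag: "real_analytic g"
  shows "real_analytic (\<lambda>x. f x * g x)"
  unfolding real_analytic_def
proof
  fix a :: "real ^ 'n"
  obtain r1 c1 where r1: "r1 > 0" and h1: "\<And>x. dist x a < r1 \<Longrightarrow>
      ((\<lambda>\<alpha>. c1 \<alpha> * (\<Prod>i\<in>UNIV. complex_of_real (x $ i - a $ i) ^ \<alpha> i)) has_sum f x) UNIV"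
    using af unfolding real_analytic_def by blast
  obtain r2 c2 where r2: "r2 > 0" and h2: "\<And>x. dist x a < r2 \<Longrightarrow>
      ((\<lambda>\<alpha>. c2 \<alpha> * (\<Prod>i\<in>UNIV. complex_of_real (x $ i - a $ i) ^ \<alpha> i)) has_sum g x) UNIV"
    using ag unfolding real_analytic_def by blast
  define c where "c \<gamma> = (\<Sum>(\<alpha>, \<beta>)\<in>fb \<gamma>. c1 \<alpha> * c2 \<beta>)" for \<gamma> :: "'n \<Rightarrow> nat"
  show "\<exists>r>0. \<exists>c. \<forall>x. dist x a < r \<longrightarrow>
        ((\<lambda>\<alpha>. c \<alpha> * (\<Prod>i\<in>UNIV. complex_of_real (x $ i - a $ i) ^ \<alpha> i)) has_sum f x * g x) UNIV"
  proof (intro exI[of _ "min r1 r2"] conjI exI[of _ c] allI impI)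
    show "min r1 r2 > 0" using r1 r2 by simp
    fix x assume "dist x a < min r1 r2"
    then have d1: "dist x a < r1" and d2: "dist x a < r2" by auto
    define Q where "Q \<alpha> = (\<Prod>i\<in>UNIV. complex_of_real (x $ i - a $ i) ^ \<alpha> i)" for \<alpha> :: "'n \<Rightarrow> nat"
    have QQ: "Q \<alpha> * Q \<beta> = Q (addf \<alpha> \<beta>)" for \<alpha> \<beta>
      unfolding Q_def addf_def by (simp add: power_add prod.distrib)
    have hp: "((\<lambda>(\<alpha>, \<beta>). (c1 \<alpha> * Q \<alpha>) * (c2 \<beta> * Q \<beta>)) has_sum f x * g x) (UNIV \<times> UNIV)"
      by (rule has_sum_prod_pairs) (use h1[OF d1] h2[OF d2] in \<open>simp_all add: Q_def\<close>)
    have bij: "bij_betw (\<lambda>(\<alpha>, \<beta>). (addf \<alpha> \<beta>, (\<alpha>, \<beta>))) (UNIV \<times> UNIV) (Sigma UNIV fb)"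
      by (rule bij_betwI[where g=snd]) (auto simp: fb_def)
    have "((\<lambda>(\<gamma>, \<alpha>\<beta>). case \<alpha>\<beta> of (\<alpha>, \<beta>) \<Rightarrow> (c1 \<alpha> * Q \<alpha>) * (c2 \<beta> * Q \<beta>)) has_sum f x * g x) (Sigma UNIV fb)"
      using has_sum_reindex_bij_betw[OF bij, of "\<lambda>(\<gamma>, \<alpha>\<beta>). case \<alpha>\<beta> of (\<alpha>, \<beta>) \<Rightarrow> (c1 \<alpha> * Q \<alpha>) * (c2 \<beta> * Q \<beta>)" "f x * g x"] hp
      by (simp add: case_prod_unfold)
    then have "((\<lambda>\<gamma>. \<Sum>\<alpha>\<beta>\<in>fb \<gamma>. case \<alpha>\<beta> of (\<alpha>, \<beta>) \<Rightarrow> (c1 \<alpha> * Q \<alpha>) * (c2 \<beta> * Q \<beta>)) has_sum f x * g x) UNIV"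
      by (rule has_sum_Sigma') (simp add: finite_fb)
    moreover have "(\<Sum>\<alpha>\<beta>\<in>fb \<gamma>. case \<alpha>\<beta> of (\<alpha>, \<beta>) \<Rightarrow> (c1 \<alpha> * Q \<alpha>) * (c2 \<beta> * Q \<beta>)) = c \<gamma> * Q \<gamma>" for \<gamma>
    proof -
      have "(\<Sum>\<alpha>\<beta>\<in>fb \<gamma>. case \<alpha>\<beta> of (\<alpha>, \<beta>) \<Rightarrow> (c1 \<alpha> * Q \<alpha>) * (c2 \<beta> * Q \<beta>))
          = (\<Sum>\<alpha>\<beta>\<in>fb \<gamma>. (case \<alpha>\<beta> of (\<alpha>, \<beta>) \<Rightarrow> c1 \<alpha> * c2 \<beta>) * Q \<gamma>)"
        by (intro sum.cong refl) (auto simp: fb_def QQ[symmetric] mult_ac)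
      then show ?thesis unfolding c_def by (simp add: sum_distrib_right case_prod_unfold)
    qed
    ultimately show "((\<lambda>\<alpha>. c \<alpha> * (\<Prod>i\<in>UNIV. complex_of_real (x $ i - a $ i) ^ \<alpha> i)) has_sum f x * g x) UNIV"
      unfolding Q_def by simp
  qed
qed

lemma analytic_const: "real_analytic (\<lambda>x :: real ^ 'n::finite. k)"
  unfolding real_analytic_def
proof (intro allI exI conjI impI)
  fix a x :: "real ^ 'n"
  show "(1::real) > 0" by simp
  have "((\<lambda>\<alpha>. (if \<alpha> = (\<lambda>_. 0) then k else 0) * (\<Prod>i\<in>UNIV. complex_of_real (x $ i - a $ i) ^ \<alpha> i)) has_sum k) {\<lambda>_. 0}"
    by (rule has_sum_finiteI) auto
  then show "((\<lambda>\<alpha>. (if \<alpha> = (\<lambda>_. 0) then k else 0) * (\<Prod>i\<in>UNIV. complex_of_real (x $ i - a $ i) ^ \<alpha> i)) has_sum k) UNIV"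
    by (rule has_sum_cong_neutral[THEN iffD1, rotated -1]) auto
qed

lemma analytic_prod:
  fixes F :: "nat \<Rightarrow> real ^ 'n::finite \<Rightarrow> complex"
  assumes "finite I" "\<And>j. j \<in> I \<Longrightarrow> real_analytic (F j)"
  shows "real_analytic (\<lambda>x. \<Prod>j\<in>I. F j x)"
  using assms
proof (induction I rule: finite_induct)
  case empty then show ?case by (simp add: analytic_const)
next
  case (insert j I) then show ?case by (simp add: analytic_mult)
qed

lemma entire_series:
  fixes F :: "complex \<Rightarrow> complex"
  assumes "F holomorphic_on UNIV"
  shows "((\<lambda>n. (deriv ^^ n) F z / fact n * t ^ n) sums F (z + t))"
proof -
  have "F holomorphic_on ball z (norm t + 1)" using assms by (rule holomorphic_on_subset) auto
  moreover have "z + t \<in> ball z (norm t + 1)" by (simp add: dist_norm)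
  ultimately have "((\<lambda>n. (deriv ^^ n) F z / fact n * ((z + t) - z) ^ n) sums F (z + t))"
    by (rule holomorphic_power_series)
  then show ?thesis by simp
qed

lemma M1_holo: "k \<ge> 0 \<Longrightarrow> M1 k holomorphic_on UNIV"
  unfolding holomorphic_on_def field_differentiable_def using M1_deriv
  by (blast intro: has_field_derivative_at_within)

lemma exp_holo: "(exp :: complex \<Rightarrow> complex) holomorphic_on UNIV"
  by (rule holomorphic_on_exp)

theorem proposition6p1:
  fixes ix :: "nat \<Rightarrow> 'n::finite"
    and \<kappa> :: "nat \<Rightarrow> real"
    and lam :: "complex ^ 'n"
  assumes "CARD('n) \<ge> 2"
    and "bij_betw ix {..<CARD('n)} UNIV"
    and "\<forall>j < CARD('n) div 2. \<kappa> j > 0"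
  shows "real_analytic (M_kernel ix \<kappa> lam)
         \<and> (\<forall>\<zeta> x. T_op ix \<kappa> (M_kernel ix \<kappa> lam) \<zeta> x = \<i> * pairing lam \<zeta> * M_kernel ix \<kappa> lam x)
         \<and> M_kernel ix \<kappa> lam 0 = 1
         \<and> (\<forall>f. real_analytic f \<and> (\<forall>\<zeta> x. T_op ix \<kappa> f \<zeta> x = \<i> * pairing lam \<zeta> * f x) \<and> f 0 = 1
                \<longrightarrow> f = M_kernel ix \<kappa> lam)"
proof -
  interpret E: exist ix \<kappa> lam
    using assms(2,3) by (unfold_locales) auto
  have an: "real_analytic E.Mk"
  proof -
    have a1: "real_analytic (\<lambda>x. exp (E.Lf x))"
      by (rule analytic_compose[OF entire_series[OF exp_holo] E.bl_Lf])
    have a2: "real_analytic (\<lambda>x. \<Prod>j<CARD('n) div 2. E.G j x)"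
    proof (rule analytic_prod)
      fix j assume "j \<in> {..<CARD('n) div 2}"
      then have j: "j < CARD('n) div 2" by simp
      show "real_analytic (E.G j)"
        unfolding E.G_def[abs_def]
        by (rule analytic_compose[OF entire_series[OF M1_holo[OF E.kj[OF j]]] E.bl_ll])
    qed simp
    have "real_analytic (\<lambda>x. exp (E.Lf x) * (\<Prod>j<CARD('n) div 2. E.G j x))"
      by (rule analytic_mult[OF a1 a2])
    then show ?thesis unfolding E.Mk_def[abs_def] .
  qed
  have m0: "E.Mk 0 = 1"
  proof -
    have "E.Lf 0 = 0" using linear_simps(3)[OF E.bl_Lf] .
    moreover have "E.G j 0 = 1" for j
      unfolding E.G_def using linear_simps(3)[OF E.bl_ll[of j]] by (simp add: M1_0)
    ultimately show ?thesis unfolding E.Mk_def by simp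
  qed
  have un: "f = M_kernel ix \<kappa> lam"
    if "real_analytic f" "\<forall>\<zeta> x. T_op ix \<kappa> f \<zeta> x = \<i> * pairing lam \<zeta> * f x" "f 0 = 1" for f
  proof -
    interpret U: uniq ix \<kappa> lam f
      using assms(2,3) that by (unfold_locales) auto
    show ?thesis by (rule U.unique)
  qed
  show ?thesis
  proof (intro conjI)
    show "real_analytic (M_kernel ix \<kappa> lam)" unfolding E.Mk_eq by (rule an)
    show "\<forall>\<zeta> x. T_op ix \<kappa> (M_kernel ix \<kappa> lam) \<zeta> x = \<i> * pairing lam \<zeta> * M_kernel ix \<kappa> lam x"
      unfolding E.Mk_eq using E.T_op_Mk by blast
    show "M_kernel ix \<kappa> lam 0 = 1" unfolding E.Mk_eq by (rule m0)
    show "\<forall>f. real_analytic f \<and> (\<forall>\<zeta> x. T_op ix \<kappa> f \<zeta> x = \<i> * pairing lam \<zeta> * f x) \<and> f 0 = 1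
                \<longrightarrow> f = M_kernel ix \<kappa> lam"
      using un by blast
  qed
qed

end
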